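(* Let $F$ be a strictly increasing toxicity-rate function with values in $[0,1]$, let $d_1<\dots<d_m$ be fixed dose levels, let $p\in(0,1)$ be the target rate, and fix constants $\Delta p_1>0$, $\Delta p_2>0$. Consider the interval design defined in the context, with toxicity responses $Y_i\mid X_i\sim\mathrm{Bernoulli}(F(X_i))$ independent given the allocations. (i) Suppose no level $d_u$ satisfies $F(d_u)\in(p-\Delta p_1,p+\Delta p_2)$, but $p\in[F(d_1),F(d_m)]$. Let $d_j,d_{j+1}$ be the two adjacent doses whose $F$ values straddle the target interval, i.e. $F(d_j)\le p-\Delta p_1$ and $F(d_{j+1})\ge p+\Delta p_2$. Then with probability $1$ the design eventually oscillates between $d_j$ and $d_{j+1}$: from some point on only $d_j$ and $d_{j+1}$ are allocated, and both are allocated infinitely often. (ii) Suppose more than one level $d_u$ satisfies $F(d_u)\in(p-\Delta p_1,p+\Delta p_2)$. Then with probability $1$ the allocations converge to one of these levels, i.e. almost surely there exist a level $d_v$ with $F(d_v)\in(p-\Delta p_1,p+\Delta p_2)$ and $N$ such that $X_i=d_v$ for all $i\ge N$.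
   Context: Interval design: subjects are treated one at a time; the first dose $X_1$ is arbitrary. After observing the response of subject $n$, allocated to the current dose $d_u=X_n$, compute $\hat F_n(d_u)=\sum_{i\le n}Y_i\mathbf{1}[X_i=d_u]/\sum_{i\le n}\mathbf{1}[X_i=d_u]$ (the raw toxicity frequency at $d_u$, possibly replaced by its monotonized version via isotonic regression over the dose levels with data). If $\hat F_n(d_u)\in(p-\Delta p_1,p+\Delta p_2)$, set $X_{n+1}=d_u$. If $\hat F_n(d_u)\le p-\Delta p_1$, set $X_{n+1}=d_{u+1}$ (or $d_m$ if $u=m$). If $\hat F_n(d_u)\ge p+\Delta p_2$, set $X_{n+1}=d_{u-1}$ (or $d_1$ if $u=1$). The design never skips dose levels. *)

theory Defs
  imports "HOL-Probability.Probability"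
begin

text \<open>Dose levels are indexed 0, ..., m-1 (paper: d_1, ..., d_m).
  Subjects are indexed 0, 1, 2, ... (paper: 1, 2, 3, ...).
  A response sequence is y :: nat => bool (True = toxicity).\<close>

definition tox_freq :: "nat list \<Rightarrow> (nat \<Rightarrow> bool) \<Rightarrow> nat \<Rightarrow> real" where
  "tox_freq xs y u =
     real (card {i. i < length xs \<and> xs ! i = u \<and> y i})
     / real (card {i. i < length xs \<and> xs ! i = u})"

definition next_dose :: "nat \<Rightarrow> real \<Rightarrow> real \<Rightarrow> real \<Rightarrow> nat list \<Rightarrow> (nat \<Rightarrow> bool) \<Rightarrow> nat" where
  "next_dose m p dp1 dp2 xs y =
     (let u = last xs; est = tox_freq xs y u in
      if est \<le> p - dp1 then (if u + 1 < m then u + 1 else m - 1)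
      else if est \<ge> p + dp2 then (if u = 0 then 0 else u - 1)
      else u)"

text \<open>allocs ... n = [X_0, ..., X_n]; X_{n+1} depends only on y 0 .. y n.\<close>
primrec allocs :: "nat \<Rightarrow> real \<Rightarrow> real \<Rightarrow> real \<Rightarrow> nat \<Rightarrow> (nat \<Rightarrow> bool) \<Rightarrow> nat \<Rightarrow> nat list" where
  "allocs m p dp1 dp2 x0 y 0 = [x0]"
| "allocs m p dp1 dp2 x0 y (Suc n) =
     allocs m p dp1 dp2 x0 y n @ [next_dose m p dp1 dp2 (allocs m p dp1 dp2 x0 y n) y]"

definition alloc :: "nat \<Rightarrow> real \<Rightarrow> real \<Rightarrow> real \<Rightarrow> nat \<Rightarrow> (nat \<Rightarrow> bool) \<Rightarrow> nat \<Rightarrow> nat" where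
  "alloc m p dp1 dp2 x0 y n = allocs m p dp1 dp2 x0 y n ! n"

end

theory Submission
  imports Defs
begin


definition pre :: "(nat \<Rightarrow> 'a \<Rightarrow> bool) \<Rightarrow> nat \<Rightarrow> 'a \<Rightarrow> bool list" where
  "pre Y n \<omega> = map (\<lambda>i. Y i \<omega>) [0..<n]"

lemma pre_Suc: "pre Y (Suc n) \<omega> = pre Y n \<omega> @ [Y n \<omega>]"
  by (simp add: pre_def)
lemma pre_0[simp]: "pre Y 0 \<omega> = []" by (simp add: pre_def)
lemma length_pre[simp]: "length (pre Y n \<omega>) = n" by (simp add: pre_def)
lemma pre_nth[simp]: "i < n \<Longrightarrow> pre Y n \<omega> ! i = Y i \<omega>" by (simp add: pre_def)
lemma take_pre: "k \<le> n \<Longrightarrow> take k (pre Y n \<omega>) = pre Y k \<omega>"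
  by (simp add: pre_def take_map)

definition wt :: "(bool list \<Rightarrow> real) \<Rightarrow> bool list \<Rightarrow> real" where
  "wt q ys = (\<Prod>i<length ys. if ys ! i then q (take i ys) else 1 - q (take i ys))"

lemma wt_snoc: "wt q (ys @ [b]) = wt q ys * (if b then q ys else 1 - q ys)"
proof -
  have "(\<Prod>i<length ys. if (ys @ [b]) ! i then q (take i (ys @ [b])) else 1 - q (take i (ys @ [b])))
      = (\<Prod>i<length ys. if ys ! i then q (take i ys) else 1 - q (take i ys))"
    by (intro prod.cong) (auto simp: nth_append)
  thus ?thesis unfolding wt_def by (simp add: nth_append)
qed

lemma wt_nil[simp]: "wt q [] = 1" by (simp add: wt_def)

definition Ex :: "(bool list \<Rightarrow> real) \<Rightarrow> nat \<Rightarrow> (bool list \<Rightarrow> real) \<Rightarrow> real" where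
  "Ex q n f = (\<Sum>ys\<in>{ys. length ys = n}. wt q ys * f ys)"

lemma finite_len: "finite {ys::bool list. length ys = n}"
proof -
  have "{ys::bool list. length ys = n} = {ys. set ys \<subseteq> UNIV \<and> length ys = n}" by auto
  thus ?thesis using finite_lists_length_eq[of "UNIV::bool set" n] by simp
qed

lemma len_Suc_eq: "{ys::bool list. length ys = Suc n} = (\<lambda>(ys,b). ys @ [b]) ` ({ys. length ys = n} \<times> UNIV)"
proof -
  have "ys \<in> (\<lambda>(ys,b). ys @ [b]) ` ({ys. length ys = n} \<times> UNIV)" if "length ys = Suc n" for ys :: "bool list"
  proof -
    from that have "ys = butlast ys @ [last ys]" by (metis append_butlast_last_id length_0_conv nat.simps(3))
    moreover have "length (butlast ys) = n" using that by simp
    ultimately show ?thesis by force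
  qed
  thus ?thesis by auto
qed

lemma Ex_Suc: "Ex q (Suc n) f = Ex q n (\<lambda>ys. q ys * f (ys @ [True]) + (1 - q ys) * f (ys @ [False]))"
proof -
  have inj: "inj_on (\<lambda>(ys,b). ys @ [b]) ({ys::bool list. length ys = n} \<times> UNIV)"
    by (auto simp: inj_on_def)
  have "Ex q (Suc n) f = (\<Sum>x\<in>{ys. length ys = n} \<times> UNIV. wt q (fst x @ [snd x]) * f (fst x @ [snd x]))"
    unfolding Ex_def len_Suc_eq by (subst sum.reindex[OF inj]) (simp add: case_prod_beta)
  also have "\<dots> = (\<Sum>ys\<in>{ys. length ys = n}. \<Sum>b\<in>UNIV. wt q (ys @ [b]) * f (ys @ [b]))"
    by (simp add: sum.cartesian_product case_prod_beta)
  also have "\<dots> = Ex q n (\<lambda>ys. q ys * f (ys @ [True]) + (1 - q ys) * f (ys @ [False]))"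
    unfolding Ex_def UNIV_bool by (auto intro!: sum.cong simp: wt_snoc algebra_simps)
  finally show ?thesis .
qed

lemma wt_nonneg: "(\<And>ys. 0 \<le> q ys \<and> q ys \<le> 1) \<Longrightarrow> 0 \<le> wt q ys"
  unfolding wt_def by (intro prod_nonneg) auto

lemma Ex_mono: "(\<And>ys. 0 \<le> q ys \<and> q ys \<le> 1) \<Longrightarrow> (\<And>ys. length ys = n \<Longrightarrow> f ys \<le> g ys) \<Longrightarrow> Ex q n f \<le> Ex q n g"
  unfolding Ex_def by (intro sum_mono mult_left_mono) (auto intro: wt_nonneg)

lemma Ex_0[simp]: "Ex q 0 f = f []"
proof -
  have "{ys::bool list. length ys = 0} = {[]}" by auto
  thus ?thesis by (simp add: Ex_def)
qed

primrec stn :: "('s \<Rightarrow> bool list \<Rightarrow> bool \<Rightarrow> 's) \<Rightarrow> 's \<Rightarrow> bool list \<Rightarrow> nat \<Rightarrow> 's" where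
  "stn upd s0 ys 0 = s0"
| "stn upd s0 ys (Suc n) = upd (stn upd s0 ys n) (take n ys) (ys ! n)"

definition st where "st upd s0 ys = stn upd s0 ys (length ys)"

lemma stn_append: "n \<le> length ys \<Longrightarrow> stn upd s0 (ys @ zs) n = stn upd s0 ys n"
  by (induction n) (auto simp: nth_append)

lemma st_snoc: "st upd s0 (ys @ [b]) = upd (st upd s0 ys) ys b"
  unfolding st_def by (simp add: stn_append)

lemma st_nil[simp]: "st upd s0 [] = s0" by (simp add: st_def)

lemma supermart:
  assumes q: "\<And>ys. 0 \<le> q ys \<and> q ys \<le> 1"
    and loc: "\<And>s ys. q ys * g (upd s ys True) + (1 - q ys) * g (upd s ys False) \<le> g s"
  shows "Ex q n (\<lambda>ys. g (st upd s0 ys)) \<le> g s0"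
proof (induction n)
  case 0 then show ?case by simp
next
  case (Suc n)
  have "Ex q (Suc n) (\<lambda>ys. g (st upd s0 ys)) \<le> Ex q n (\<lambda>ys. g (st upd s0 ys))"
    unfolding Ex_Suc st_snoc by (rule Ex_mono[OF q]) (rule loc)
  with Suc show ?case by simp
qed


locale tree_model = prob_space M for M :: "'a measure" +
  fixes Y :: "nat \<Rightarrow> 'a \<Rightarrow> bool" and q :: "bool list \<Rightarrow> real"
  assumes Ymeas: "\<And>i. Y i \<in> measurable M (count_space UNIV)"
    and q01: "\<And>ys. 0 \<le> q ys \<and> q ys \<le> 1"
    and law: "\<And>ys. prob {\<omega>\<in>space M. pre Y (length ys) \<omega> = ys \<and> Y (length ys) \<omega>}
                 = q ys * prob {\<omega>\<in>space M. pre Y (length ys) \<omega> = ys}"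
begin

lemma Y_sets: "{\<omega>\<in>space M. Y i \<omega> = b} \<in> sets M"
proof -
  have "Y i -` {b} \<inter> space M \<in> sets M" using Ymeas[of i] by (rule measurable_sets) simp
  moreover have "Y i -` {b} \<inter> space M = {\<omega>\<in>space M. Y i \<omega> = b}" by auto
  ultimately show ?thesis by simp
qed

lemma pre_sets: "{\<omega>\<in>space M. pre Y n \<omega> = ys} \<in> sets M"
proof (induction n arbitrary: ys)
  case 0
  show ?case by (cases "ys = []") auto
next
  case (Suc n)
  show ?case
  proof (cases "ys = []")
    case True then show ?thesis by (simp add: pre_Suc)
  next
    case False
    then have ys: "ys = butlast ys @ [last ys]" by simp
    have "{\<omega>\<in>space M. pre Y (Suc n) \<omega> = ys} =
        {\<omega>\<in>space M. pre Y n \<omega> = butlast ys} \<inter> {\<omega>\<in>space M. Y n \<omega> = last ys}"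
      by (subst (1) ys) (auto simp: pre_Suc)
    then show ?thesis using Suc Y_sets by auto
  qed
qed

lemma pre_pred_sets: "{\<omega>\<in>space M. P (pre Y n \<omega>)} \<in> sets M"
proof -
  have "{\<omega>\<in>space M. P (pre Y n \<omega>)} = (\<Union>ys\<in>{ys. length ys = n \<and> P ys}. {\<omega>\<in>space M. pre Y n \<omega> = ys})"
    by auto
  moreover have "finite {ys::bool list. length ys = n \<and> P ys}" using finite_len[of n] by (rule rev_finite_subset) auto
  ultimately show ?thesis using pre_sets by auto
qed

lemma P_pre: "length ys = n \<Longrightarrow> prob {\<omega>\<in>space M. pre Y n \<omega> = ys} = wt q ys"
proof (induction n arbitrary: ys)
  case 0
  then show ?case by (simp add: prob_space)
next
  case (Suc n)
  then have ys: "ys = butlast ys @ [last ys]" and lb: "length (butlast ys) = n"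
    by (metis append_butlast_last_id length_0_conv nat.simps(3)) (use Suc in simp)
  define zs where "zs = butlast ys"
  have IH: "prob {\<omega>\<in>space M. pre Y n \<omega> = zs} = wt q zs" using Suc lb zs_def by simp
  have lw: "prob {\<omega>\<in>space M. pre Y n \<omega> = zs \<and> Y n \<omega>} = q zs * wt q zs"
    using law[of zs] IH lb zs_def by simp
  have eq: "{\<omega>\<in>space M. pre Y (Suc n) \<omega> = ys} = {\<omega>\<in>space M. pre Y n \<omega> = zs \<and> Y n \<omega> = last ys}"
    by (subst (1) ys) (auto simp: pre_Suc zs_def)
  show ?case
  proof (cases "last ys")
    case True
    then show ?thesis using eq lw by (subst ys) (simp add: wt_snoc zs_def[symmetric] mult.commute)
  next
    case False
    have s1: "{\<omega>\<in>space M. pre Y n \<omega> = zs \<and> Y n \<omega> = False} =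
      {\<omega>\<in>space M. pre Y n \<omega> = zs} - {\<omega>\<in>space M. pre Y n \<omega> = zs \<and> Y n \<omega>}" by auto
    have s2: "{\<omega>\<in>space M. pre Y n \<omega> = zs \<and> Y n \<omega>} \<in> sets M"
      using pre_pred_sets[of "\<lambda>x. x = zs" n] Y_sets[of n True] by (auto simp: Collect_conj_eq[symmetric] Int_def)
    have lf: "last ys = False" using False by simp
    have "prob {\<omega>\<in>space M. pre Y (Suc n) \<omega> = ys} = wt q zs - q zs * wt q zs"
      unfolding eq lf s1 using IH lw s2 pre_sets
      by (subst finite_measure_Diff) auto
    then show ?thesis using False by (subst (2) ys) (simp add: wt_snoc zs_def[symmetric] algebra_simps)
  qed
qed

lemma P_event: "prob {\<omega>\<in>space M. P (pre Y n \<omega>)} = Ex q n (\<lambda>ys. if P ys then 1 else 0)"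
proof -
  have fin: "finite {ys::bool list. length ys = n \<and> P ys}" using finite_len[of n] by (rule rev_finite_subset) auto
  have "{\<omega>\<in>space M. P (pre Y n \<omega>)} = (\<Union>ys\<in>{ys. length ys = n \<and> P ys}. {\<omega>\<in>space M. pre Y n \<omega> = ys})"
    by auto
  then have "prob {\<omega>\<in>space M. P (pre Y n \<omega>)} = (\<Sum>ys\<in>{ys. length ys = n \<and> P ys}. prob {\<omega>\<in>space M. pre Y n \<omega> = ys})"
    using fin pre_sets by (simp add: finite_measure_finite_Union disjoint_family_on_def) (subst finite_measure_finite_Union, auto simp: disjoint_family_on_def)
  also have "\<dots> = (\<Sum>ys\<in>{ys. length ys = n \<and> P ys}. wt q ys)" by (intro sum.cong) (auto simp: P_pre)
  also have "\<dots> = Ex q n (\<lambda>ys. if P ys then 1 else 0)"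
    unfolding Ex_def by (rule sum.mono_neutral_cong_left) (auto simp: finite_len)
  finally show ?thesis .
qed

lemma markov:
  assumes "\<And>ys. length ys = N \<Longrightarrow> 0 \<le> f ys" "\<And>ys. length ys = N \<Longrightarrow> P ys \<Longrightarrow> t \<le> f ys" "t > 0"
  shows "prob {\<omega>\<in>space M. P (pre Y N \<omega>)} \<le> Ex q N f / t"
proof -
  have "t * Ex q N (\<lambda>ys. if P ys then 1 else 0) = Ex q N (\<lambda>ys. if P ys then t else 0)"
    unfolding Ex_def by (simp add: sum_distrib_left) (intro sum.cong, auto)
  also have "\<dots> \<le> Ex q N f" using assms by (intro Ex_mono q01) auto
  finally show ?thesis using assms(3) by (simp add: P_event field_simps)
qed

lemma machine_bound:
  assumes loc: "\<And>s ys. q ys * g (upd s ys True) + (1 - q ys) * g (upd s ys False) \<le> g s"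
    and nn: "\<And>s. 0 \<le> g s" and big: "\<And>s. P s \<Longrightarrow> t \<le> g s" and t: "t > 0"
  shows "prob {\<omega>\<in>space M. P (st upd s0 (pre Y N \<omega>))} \<le> g s0 / t"
proof -
  have "prob {\<omega>\<in>space M. P (st upd s0 (pre Y N \<omega>))} \<le> Ex q N (\<lambda>ys. g (st upd s0 ys)) / t"
    by (rule markov[where P="\<lambda>ys. P (st upd s0 ys)"]) (use nn big t in auto)
  also have "\<dots> \<le> g s0 / t"
  proof -
    have "Ex q N (\<lambda>ys. g (st upd s0 ys)) \<le> g s0" by (rule supermart) (use q01 loc in auto)
    thus ?thesis using t by (simp add: divide_right_mono)
  qed
  finally show ?thesis .
qed

end


context tree_model begin

lemma prob_inc_bound:
  assumes "\<And>n. A n \<in> sets M" "\<And>n. A n \<subseteq> A (Suc n)" "\<And>n. prob (A n) \<le> B"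
  shows "prob (\<Union>n. A n) \<le> B"
proof -
  have "(\<lambda>n. prob (A n)) \<longlonglongrightarrow> prob (\<Union>n. A n)"
    by (rule finite_Lim_measure_incseq) (use assms in \<open>auto intro: incseq_SucI\<close>)
  thus ?thesis by (rule LIMSEQ_le_const2) (use assms in auto)
qed

lemma AE_by_bounds:
  assumes sets: "\<And>K n. A K n \<in> sets M" and inc: "\<And>K n. A K n \<subseteq> A K (Suc n)"
    and bnd: "\<And>K n. 1 \<le> K \<Longrightarrow> prob (A K n) \<le> C / real K"
    and cover: "\<And>\<omega> K. \<omega> \<in> space M \<Longrightarrow> \<not> P \<omega> \<Longrightarrow> 1 \<le> K \<Longrightarrow> \<exists>n. \<omega> \<in> A K n"
  shows "AE \<omega> in M. P \<omega>"
proof (rule AE_I')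
  define N where "N = (\<Inter>K. \<Union>n. A (Suc K) n)"
  have U: "(\<Union>n. A (Suc K) n) \<in> sets M" for K by (rule sets.countable_UN) (use sets in auto)
  have Ns: "N \<in> sets M" unfolding N_def by (rule sets.countable_INT) (use U in auto)
  have b: "prob N \<le> C / real (Suc K)" for K
  proof -
    have "prob N \<le> prob (\<Union>n. A (Suc K) n)"
      using sets by (intro finite_measure_mono) (auto simp: N_def)
    also have "\<dots> \<le> C / real (Suc K)" by (rule prob_inc_bound) (use sets inc bnd[of "Suc K"] in auto)
    finally show ?thesis .
  qed
  have "prob N \<le> 0"
  proof (rule field_le_epsilon)
    fix e :: real assume e: "0 < e"
    obtain K :: nat where K: "C / e < real K" using reals_Archimedean2 by blast
    have "C / real (Suc K) \<le> e"
    proof -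
      have "C \<le> e * real (Suc K)" using K e by (simp add: field_simps)
      thus ?thesis by (simp add: field_simps)
    qed
    with b[of K] show "prob N \<le> 0 + e" by simp
  qed
  then have "prob N = 0" using measure_nonneg[of M N] by linarith
  then show "N \<in> null_sets M" using Ns by (auto simp: emeasure_eq_measure)
  show "{\<omega> \<in> space M. \<not> P \<omega>} \<subseteq> N"
  proof
    fix \<omega> assume w: "\<omega> \<in> {\<omega> \<in> space M. \<not> P \<omega>}"
    have "\<omega> \<in> (\<Union>n. A (Suc K) n)" for K
    proof -
      obtain n where "\<omega> \<in> A (Suc K) n" using cover[of \<omega> "Suc K"] w by auto
      thus ?thesis by blast
    qed
    thus "\<omega> \<in> N" unfolding N_def by blast
  qed
qed

end

locale walk = tree_model +
  fixes act :: "bool list \<Rightarrow> bool" and q0 :: real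
  assumes q_act: "\<And>ys. act ys \<Longrightarrow> q ys = q0"
    and q0_01: "0 \<le> q0" "q0 \<le> 1"
begin

definition Cl :: "bool list \<Rightarrow> nat" where
  "Cl = st (\<lambda>k ys b. if act ys then Suc k else k) 0"
definition Sl :: "bool list \<Rightarrow> nat" where
  "Sl = st (\<lambda>k ys b. if act ys \<and> b then Suc k else k) 0"

lemma Cl_snoc: "Cl (ys @ [b]) = (if act ys then Suc (Cl ys) else Cl ys)"
  unfolding Cl_def st_snoc by simp
lemma Sl_snoc: "Sl (ys @ [b]) = (if act ys \<and> b then Suc (Sl ys) else Sl ys)"
  unfolding Sl_def st_snoc by simp

abbreviation "Cw \<omega> n \<equiv> Cl (pre Y n \<omega>)"
abbreviation "Sw \<omega> n \<equiv> Sl (pre Y n \<omega>)"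

lemma Cw_mono: "m \<le> n \<Longrightarrow> Cw \<omega> m \<le> Cw \<omega> n"
proof (induction n)
  case 0 then show ?case by simp
next
  case (Suc n)
  have st: "Cw \<omega> n \<le> Cw \<omega> (Suc n)" by (simp add: pre_Suc Cl_snoc)
  show ?case
  proof (cases "m = Suc n")
    case True then show ?thesis by simp
  next
    case False
    then have "m \<le> n" using Suc.prems by simp
    then show ?thesis using Suc.IH st by linarith
  qed
qed

lemma Cw_unbounded:
  assumes "\<forall>N. \<exists>n\<ge>N. act (pre Y n \<omega>)"
  shows "\<exists>N. K \<le> Cw \<omega> N"
proof (induction K)
  case 0 then show ?case by simp
next
  case (Suc K)
  then obtain N where N: "K \<le> Cw \<omega> N" by blast
  obtain n where n: "n \<ge> N" "act (pre Y n \<omega>)" using assms by blast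
  have "Cw \<omega> N \<le> Cw \<omega> n" using Cw_mono n by simp
  then have "Suc K \<le> Cw \<omega> (Suc n)" using N n by (simp add: pre_Suc Cl_snoc)
  then show ?case by blast
qed

lemma step_var: "q0 * (D + (1 - q0))^2 + (1 - q0) * (D - q0)^2 = D^2 + q0 * (1 - q0)"
  by (simp add: power2_eq_square algebra_simps)

lemma var_le: "q0 * (1 - q0) \<le> 1"
  using q0_01 by (intro mult_le_one) auto

end


lemma exp_comb: "(q0::real) * (a / z + c) + (1 - q0) * (b / z + c) = (q0 * a + (1 - q0) * b) / z + c"
  by (simp add: algebra_simps add_divide_distrib diff_divide_distrib)

lemma auxL2:
  fixes k :: nat and D v :: real
  assumes k: "1 \<le> k" and v: "0 \<le> v" "v \<le> 1"
  shows "(D^2 + v) / (real k + 1)^2 + 1 / (real k + 1) \<le> D^2 / (real k)^2 + 1 / real k"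
proof -
  have kp: "real k > 0" using k by simp
  have a: "D^2 / (real k + 1)^2 \<le> D^2 / (real k)^2"
    using kp by (intro divide_left_mono) (auto intro: power_mono)
  have b: "v / (real k + 1)^2 + 1 / (real k + 1) \<le> 1 / real k"
  proof -
    have "v / (real k + 1)^2 \<le> 1 / (real k + 1)^2" using v kp by (intro divide_right_mono) auto
    also have "1 / (real k + 1)^2 + 1 / (real k + 1) \<le> 1 / real k"
    proof -
      have "1 / (real k + 1)^2 \<le> 1 / (real k * (real k + 1))"
        using kp by (intro divide_left_mono) (auto simp: power2_eq_square)
      moreover have "1 / (real k * (real k + 1)) = 1 / real k - 1 / (real k + 1)"
        using kp by (simp add: field_simps)
      ultimately show ?thesis by linarith
    qed
    finally show ?thesis by linarith
  qed
  have "(D^2 + v) / (real k + 1)^2 = D^2 / (real k + 1)^2 + v / (real k + 1)^2"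
    by (simp add: add_divide_distrib)
  with a b show ?thesis by linarith
qed

context walk begin

definition updL :: "nat \<Rightarrow> real \<Rightarrow> nat \<times> real \<times> bool \<Rightarrow> bool list \<Rightarrow> bool \<Rightarrow> nat \<times> real \<times> bool" where
  "updL K eps s ys b = (case s of (k, D, stp) \<Rightarrow>
     if stp \<or> \<not> act ys then (k, D, stp)
     else (Suc k, D + (if b then 1 - q0 else - q0),
           K \<le> Suc k \<and> eps * real (Suc k) \<le> D + (if b then 1 - q0 else - q0)))"

definition gL :: "nat \<Rightarrow> nat \<times> real \<times> bool \<Rightarrow> real" where
  "gL K s = (case s of (k, D, stp) \<Rightarrow>
     if k \<le> K then D^2 / (real K)^2 + (real K - real k) / (real K)^2 + 1 / real K
     else D^2 / (real k)^2 + 1 / real k)"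

lemma gL_nonneg: "0 \<le> gL K s"
  by (cases s) (auto simp: gL_def)

lemma gL_loc:
  assumes K: "1 \<le> K"
  shows "q ys * gL K (updL K eps s ys True) + (1 - q ys) * gL K (updL K eps s ys False) \<le> gL K s"
proof -
  obtain k D stp where s: "s = (k, D, stp)" by (cases s) auto
  show ?thesis
  proof (cases "stp \<or> \<not> act ys")
    case True
    then show ?thesis by (simp add: s updL_def algebra_simps)
  next
    case False
    then have q: "q ys = q0" and a: "act ys" "\<not> stp" using q_act by auto
    let ?v = "q0 * (1 - q0)"
    have v: "0 \<le> ?v" "?v \<le> 1" using q0_01 var_le by auto
    show ?thesis
    proof (cases "Suc k \<le> K")
      case True
      have "q ys * gL K (updL K eps s ys True) + (1 - q ys) * gL K (updL K eps s ys False)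
          = q0 * ((D + (1 - q0))^2 / (real K)^2 + ((real K - real (Suc k)) / (real K)^2 + 1 / real K))
            + (1 - q0) * ((D - q0)^2 / (real K)^2 + ((real K - real (Suc k)) / (real K)^2 + 1 / real K))"
        using True a by (simp add: s q updL_def gL_def add.assoc)
      also have "\<dots> = (D^2 + ?v) / (real K)^2 + ((real K - real (Suc k)) / (real K)^2 + 1 / real K)"
        by (subst exp_comb) (simp add: step_var)
      also have "\<dots> \<le> gL K s"
      proof -
        have "(D^2 + ?v) / (real K)^2 + (real K - real (Suc k)) / (real K)^2
           \<le> D^2 / (real K)^2 + (real K - real k) / (real K)^2"
        proof -
          have e1: "(D^2 + ?v) / (real K)^2 + (real K - real (Suc k)) / (real K)^2
              = (D^2 + ?v + (real K - real (Suc k))) / (real K)^2" by (simp add: add_divide_distrib)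
          have e2: "D^2 / (real K)^2 + (real K - real k) / (real K)^2
              = (D^2 + (real K - real k)) / (real K)^2" by (simp add: add_divide_distrib)
          show ?thesis unfolding e1 e2 by (rule divide_right_mono) (use v in auto)
        qed
        thus ?thesis using True by (simp add: s gL_def)
      qed
      finally show ?thesis .
    next
      case False
      then have kK: "K \<le> k" by simp
      have g0: "gL K s = D^2 / (real k)^2 + 1 / real k"
        using kK by (auto simp: s gL_def)
      have "q ys * gL K (updL K eps s ys True) + (1 - q ys) * gL K (updL K eps s ys False)
          = q0 * ((D + (1 - q0))^2 / (real k + 1)^2 + 1 / (real k + 1))
            + (1 - q0) * ((D - q0)^2 / (real k + 1)^2 + 1 / (real k + 1))"
        using False a by (simp add: s q updL_def gL_def add.commute)
      also have "\<dots> = (D^2 + ?v) / (real k + 1)^2 + 1 / (real k + 1)"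
        by (subst exp_comb) (simp add: step_var)
      also have "\<dots> \<le> gL K s" unfolding g0 by (rule auxL2) (use kK K v in auto)
      finally show ?thesis .
    qed
  qed
qed

end


context walk begin

definition "runL K eps \<omega> n = st (updL K eps) (0, 0, False) (pre Y n \<omega>)"

lemma runL_Suc: "runL K eps \<omega> (Suc n) = updL K eps (runL K eps \<omega> n) (pre Y n \<omega>) (Y n \<omega>)"
  unfolding runL_def pre_Suc st_snoc ..

lemma runL_inv:
  "case runL K eps \<omega> n of (k, D, stp) \<Rightarrow>
     (\<not> stp \<longrightarrow> k = Cw \<omega> n \<and> D = real (Sw \<omega> n) - q0 * real (Cw \<omega> n)) \<and>
     (stp \<longrightarrow> K \<le> k \<and> eps * real k \<le> D)"
proof (induction n)
  case 0
  then show ?case by (simp add: runL_def Cl_def Sl_def)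
next
  case (Suc n)
  obtain k D stp where r: "runL K eps \<omega> n = (k, D, stp)" by (cases "runL K eps \<omega> n") auto
  show ?case
  proof (cases "stp \<or> \<not> act (pre Y n \<omega>)")
    case True
    then show ?thesis using Suc r
      by (auto simp: runL_Suc updL_def pre_Suc Cl_snoc Sl_snoc)
  next
    case False
    then show ?thesis using Suc r
      by (auto simp: runL_Suc updL_def pre_Suc Cl_snoc Sl_snoc algebra_simps)
  qed
qed

lemma runL_mono: "snd (snd (runL K eps \<omega> n)) \<Longrightarrow> snd (snd (runL K eps \<omega> (Suc n)))"
  by (cases "runL K eps \<omega> n") (auto simp: runL_Suc updL_def)

lemma runL_hit:
  assumes "act (pre Y n \<omega>)" "K \<le> Cw \<omega> (Suc n)"
    "eps * real (Cw \<omega> (Suc n)) \<le> real (Sw \<omega> (Suc n)) - q0 * real (Cw \<omega> (Suc n))"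
  shows "snd (snd (runL K eps \<omega> (Suc n)))"
proof -
  obtain k D stp where r: "runL K eps \<omega> n = (k, D, stp)" by (cases "runL K eps \<omega> n") auto
  show ?thesis
  proof (cases stp)
    case True then show ?thesis using runL_mono[where K=K and eps=eps and \<omega>=\<omega> and n=n] r by simp
  next
    case False
    with runL_inv[where K=K and eps=eps and \<omega>=\<omega> and n=n] r have kD: "k = Cw \<omega> n" "D = real (Sw \<omega> n) - q0 * real (Cw \<omega> n)" by auto
    show ?thesis using assms False r kD
      by (auto simp: runL_Suc updL_def pre_Suc Cl_snoc Sl_snoc algebra_simps split: if_splits)
  qed
qed

theorem walk_L:
  assumes c: "q0 < c"
  shows "AE \<omega> in M. \<not> (\<forall>N. \<exists>n\<ge>N. act (pre Y n \<omega>) \<and> c * real (Cw \<omega> (Suc n)) \<le> real (Sw \<omega> (Suc n)))"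
proof -
  define eps where "eps = c - q0"
  have eps: "eps > 0" using c eps_def by simp
  define A where "A K n = {\<omega>\<in>space M. snd (snd (runL K eps \<omega> n))}" for K n
  show ?thesis
  proof (rule AE_by_bounds[where A = A and C = "2 / eps^2"])
    show "A K n \<in> sets M" for K n unfolding A_def runL_def by (rule pre_pred_sets)
    show "A K n \<subseteq> A K (Suc n)" for K n unfolding A_def using runL_mono by auto
  next
    fix K n :: nat assume K: "1 \<le> K"
    let ?P = "\<lambda>s. case s of (k, D, stp) \<Rightarrow> stp \<and> K \<le> k \<and> eps * real k \<le> D"
    have "A K n \<subseteq> {\<omega>\<in>space M. ?P (st (updL K eps) (0, 0, False) (pre Y n \<omega>))}"
    proof
      fix \<omega> assume "\<omega> \<in> A K n"
      then show "\<omega> \<in> {\<omega>\<in>space M. ?P (st (updL K eps) (0, 0, False) (pre Y n \<omega>))}"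
        using runL_inv[where K=K and eps=eps and n=n and \<omega>=\<omega>] unfolding A_def runL_def
        by (cases "st (updL K eps) (0, 0, False) (pre Y n \<omega>)") auto
    qed
    then have "prob (A K n) \<le> prob {\<omega>\<in>space M. ?P (st (updL K eps) (0, 0, False) (pre Y n \<omega>))}"
      by (intro finite_measure_mono pre_pred_sets)
    also have "\<dots> \<le> gL K (0, 0, False) / eps^2"
    proof (rule machine_bound)
      show "q ys * gL K (updL K eps s ys True) + (1 - q ys) * gL K (updL K eps s ys False) \<le> gL K s" for s ys
        using gL_loc K by blast
      show "0 \<le> gL K s" for s by (rule gL_nonneg)
      show "0 < eps^2" using eps by simp
      fix s assume Ps: "?P s"
      then obtain k D where s: "s = (k, D, True)" "K \<le> k" "eps * real k \<le> D" by (auto split: prod.splits)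
      have kp: "real k > 0" using s K by simp
      have "eps^2 \<le> D^2 / (real k)^2"
      proof -
        have "(eps * real k)^2 \<le> D^2" using s eps kp by (intro power_mono) auto
        thus ?thesis using kp by (simp add: field_simps power_mult_distrib)
      qed
      moreover have "gL K s \<ge> D^2 / (real k)^2"
      proof (cases "k \<le> K")
        case True then have "k = K" using s by simp
        then show ?thesis using s by (simp add: gL_def)
      next
        case False then show ?thesis using s by (simp add: gL_def)
      qed
      ultimately show "eps^2 \<le> gL K s" by linarith
    qed
    also have "gL K (0, 0, False) = 2 / real K" using K by (simp add: gL_def field_simps power2_eq_square)
    finally show "prob (A K n) \<le> 2 / eps^2 / real K" by (simp add: field_simps)
  next
    fix \<omega> and K :: nat
    assume w: "\<omega> \<in> space M" and nP: "\<not> \<not> (\<forall>N. \<exists>n\<ge>N. act (pre Y n \<omega>) \<and> c * real (Cw \<omega> (Suc n)) \<le> real (Sw \<omega> (Suc n)))"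
    then have io: "\<forall>N. \<exists>n\<ge>N. act (pre Y n \<omega>)" by blast
    obtain N where N: "K \<le> Cw \<omega> N" using Cw_unbounded[OF io] by blast
    obtain n where n: "n \<ge> N" "act (pre Y n \<omega>)" "c * real (Cw \<omega> (Suc n)) \<le> real (Sw \<omega> (Suc n))"
      using nP by blast
    have "Cw \<omega> N \<le> Cw \<omega> (Suc n)" using n by (intro Cw_mono) simp
    then have "snd (snd (runL K eps \<omega> (Suc n)))"
      using n N by (intro runL_hit) (auto simp: eps_def algebra_simps)
    then show "\<exists>n. \<omega> \<in> A K n" using w unfolding A_def by blast
  qed
qed

end


lemma st_inv:
  assumes "Inv s0" "\<And>s ys b. Inv s \<Longrightarrow> Inv (upd s ys b)"
  shows "Inv (st upd s0 ys)"
proof (induction ys rule: rev_induct)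
  case Nil then show ?case using assms by simp
next
  case (snoc b ys) then show ?case using assms by (simp add: st_snoc)
qed

lemma supermart_inv:
  assumes q: "\<And>ys. 0 \<le> q ys \<and> q ys \<le> 1"
    and i0: "Inv s0" and istep: "\<And>s ys b. Inv s \<Longrightarrow> Inv (upd s ys b)"
    and loc: "\<And>s ys. Inv s \<Longrightarrow> q ys * g (upd s ys True) + (1 - q ys) * g (upd s ys False) \<le> g s"
  shows "Ex q n (\<lambda>ys. g (st upd s0 ys)) \<le> g s0"
proof (induction n)
  case 0 then show ?case by simp
next
  case (Suc n)
  have "Ex q (Suc n) (\<lambda>ys. g (st upd s0 ys)) \<le> Ex q n (\<lambda>ys. g (st upd s0 ys))"
    unfolding Ex_Suc st_snoc by (rule Ex_mono[OF q]) (rule loc, rule st_inv[of Inv, OF i0 istep])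
  with Suc show ?case by simp
qed

context tree_model begin

lemma machine_bound_inv:
  assumes i0: "Inv s0" and istep: "\<And>s ys b. Inv s \<Longrightarrow> Inv (upd s ys b)"
    and loc: "\<And>s ys. Inv s \<Longrightarrow> q ys * g (upd s ys True) + (1 - q ys) * g (upd s ys False) \<le> g s"
    and nn: "\<And>s. Inv s \<Longrightarrow> 0 \<le> g s" and big: "\<And>s. Inv s \<Longrightarrow> P s \<Longrightarrow> t \<le> g s" and t: "t > 0"
  shows "prob {\<omega>\<in>space M. P (st upd s0 (pre Y N \<omega>))} \<le> g s0 / t"
proof -
  have I: "Inv (st upd s0 ys)" for ys by (rule st_inv[of Inv, OF i0 istep])
  have "prob {\<omega>\<in>space M. P (st upd s0 (pre Y N \<omega>))} \<le> Ex q N (\<lambda>ys. g (st upd s0 ys)) / t"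
    by (rule markov[where P="\<lambda>ys. P (st upd s0 ys)"]) (use nn big t I in auto)
  also have "\<dots> \<le> g s0 / t"
  proof -
    have "Ex q N (\<lambda>ys. g (st upd s0 ys)) \<le> g s0" by (rule supermart_inv[of q Inv]) (use q01 i0 istep loc in auto)
    thus ?thesis using t by (simp add: divide_right_mono)
  qed
  finally show ?thesis .
qed

end


definition Psi :: "real \<Rightarrow> real \<Rightarrow> real" where "Psi H x = (x + 1) * (H + 1 - x)"

lemma Psi_le: "H \<ge> 0 \<Longrightarrow> Psi H x \<le> (H + 2)^2"
proof -
  assume H: "H \<ge> 0"
  have "4 * Psi H x \<le> (H + 2)^2"
  proof -
    have "0 \<le> ((x + 1) - (H + 1 - x))^2" by simp
    thus ?thesis unfolding Psi_def by (simp add: power2_eq_square algebra_simps)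
  qed
  moreover have "0 \<le> (H + 2)^2" by simp
  ultimately show ?thesis by linarith
qed

lemma Psi_nonneg: "-1 \<le> x \<Longrightarrow> x \<le> H + 1 \<Longrightarrow> 0 \<le> Psi H x"
  unfolding Psi_def by (intro mult_nonneg_nonneg) auto

lemma Psi_pos: "0 < x \<Longrightarrow> x < H \<Longrightarrow> 0 < Psi H x"
  unfolding Psi_def by (intro mult_pos_pos) auto

lemma Psi_step: "(q0::real) * Psi H (D + (1 - q0)) + (1 - q0) * Psi H (D + - q0) = Psi H D - q0 * (1 - q0)"
  unfolding Psi_def by (simp add: algebra_simps power2_eq_square)

lemma conv_le: "0 \<le> (q::real) \<Longrightarrow> q \<le> 1 \<Longrightarrow> a \<le> c \<Longrightarrow> b \<le> c \<Longrightarrow> q * a + (1 - q) * b \<le> c"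
proof -
  assume "0 \<le> q" "q \<le> 1" "a \<le> c" "b \<le> c"
  then have "q * a \<le> q * c" "(1 - q) * b \<le> (1 - q) * c" by (auto intro: mult_left_mono)
  then show ?thesis by (simp add: algebra_simps)
qed

context walk begin

definition updR :: "nat \<Rightarrow> real \<Rightarrow> nat \<times> real \<times> nat \<times> nat \<Rightarrow> bool list \<Rightarrow> bool \<Rightarrow> nat \<times> real \<times> nat \<times> nat" where
  "updR K H s ys b = (case s of (k, D, ph, t) \<Rightarrow>
     if \<not> act ys \<or> 2 \<le> ph then (k, D, ph, t) else
     (let D' = D + (if b then 1 - q0 else - q0) in
      if ph = 0 \<and> Suc k < K then (Suc k, D', 0, t)
      else (Suc k, D', if D' \<le> 0 then 3 else if H \<le> D' then 2 else 1, if ph = 0 then t else Suc t)))"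

definition InvR :: "nat \<Rightarrow> real \<Rightarrow> nat \<times> real \<times> nat \<times> nat \<Rightarrow> bool" where
  "InvR K H s = (case s of (k, D, ph, t) \<Rightarrow> ph \<le> 3 \<and> (ph = 0 \<longrightarrow> k < K \<and> D \<le> real k \<and> t = 0)
      \<and> (ph = 1 \<longrightarrow> 0 < D \<and> D < H) \<and> (ph = 2 \<longrightarrow> H \<le> D))"

definition g1 :: "nat \<Rightarrow> nat \<times> real \<times> nat \<times> nat \<Rightarrow> real" where
  "g1 K s = (case s of (k, D, ph, t) \<Rightarrow> if ph = 0 then real K + 1 else if ph = 3 then max (D + 1) 0 else D + 1)"

definition g2 :: "real \<Rightarrow> nat \<times> real \<times> nat \<times> nat \<Rightarrow> real" where
  "g2 H s = (case s of (k, D, ph, t) \<Rightarrow> if ph = 0 then (H + 2)^2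
      else (if ph = 1 then Psi H D else max (Psi H D) 0) + q0 * (1 - q0) * real t)"

lemma InvR_0: "1 \<le> K \<Longrightarrow> InvR K H (0, 0, 0, 0)" by (simp add: InvR_def)

lemma xi_le: "(if b then 1 - q0 else - q0) \<le> 1" "-1 \<le> (if b then 1 - q0 else - q0)"
  using q0_01 by auto

lemma InvR_step: "InvR K H s \<Longrightarrow> InvR K H (updR K H s ys b)"
  using xi_le[of b] by (cases s) (auto simp: InvR_def updR_def Let_def)

lemma g1_loc:
  assumes I: "InvR K H s" and H: "0 < H"
  shows "q ys * g1 K (updR K H s ys True) + (1 - q ys) * g1 K (updR K H s ys False) \<le> g1 K s"
proof -
  obtain k D ph t where s: "s = (k, D, ph, t)" by (cases s) auto
  show ?thesis
  proof (cases "\<not> act ys \<or> 2 \<le> ph")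
    case True then show ?thesis by (simp add: s updR_def algebra_simps)
  next
    case False
    then have a: "act ys" "ph \<le> 1" and q: "q ys = q0" using q_act by auto
    show ?thesis
    proof (cases "ph = 0")
      case True
      then have kK: "k < K" "D \<le> real k" using I s by (auto simp: InvR_def)
      have "g1 K (updR K H s ys b) \<le> real K + 1" for b
      proof -
        have "D + (if b then 1 - q0 else - q0) \<le> real K" using kK xi_le[of b] by linarith
        thus ?thesis using True a by (auto simp: s updR_def g1_def Let_def)
      qed
      then show ?thesis unfolding q using q0_01 True by (intro conv_le) (auto simp: s g1_def)
    next
      case False
      then have ph: "ph = 1" using a by simp
      then have D: "0 < D" "D < H" using I s by (auto simp: InvR_def)
      have e: "g1 K (updR K H s ys b) = D + (if b then 1 - q0 else - q0) + 1" for b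
        using ph a D q0_01 by (auto simp: s updR_def g1_def Let_def)
      show ?thesis unfolding e q using ph by (simp add: s g1_def algebra_simps)
    qed
  qed
qed

lemma g2_loc:
  assumes I: "InvR K H s" and H: "0 < H"
  shows "q ys * g2 H (updR K H s ys True) + (1 - q ys) * g2 H (updR K H s ys False) \<le> g2 H s"
proof -
  obtain k D ph t where s: "s = (k, D, ph, t)" by (cases s) auto
  let ?v = "q0 * (1 - q0)"
  show ?thesis
  proof (cases "\<not> act ys \<or> 2 \<le> ph")
    case True then show ?thesis by (simp add: s updR_def algebra_simps)
  next
    case False
    then have a: "act ys" "ph \<le> 1" and q: "q ys = q0" using q_act by auto
    show ?thesis
    proof (cases "ph = 0")
      case True
      then have t: "t = 0" using I s by (auto simp: InvR_def)
      have "g2 H (updR K H s ys b) \<le> (H + 2)^2" for b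
        using True a t Psi_le[of H] H by (auto simp: s updR_def g2_def Let_def)
      then show ?thesis unfolding q using q0_01 True by (intro conv_le) (auto simp: s g2_def)
    next
      case False
      then have ph: "ph = 1" using a by simp
      then have D: "0 < D" "D < H" using I s by (auto simp: InvR_def)
      have e: "g2 H (updR K H s ys b) = Psi H (D + (if b then 1 - q0 else - q0)) + ?v * real (Suc t)" for b
      proof -
        have "0 \<le> Psi H (D + (if b then 1 - q0 else - q0))"
          using D q0_01 by (intro Psi_nonneg) auto
        then show ?thesis using ph a D by (auto simp: s updR_def g2_def Let_def)
      qed
      have "q0 * (Psi H (D + (1 - q0)) + ?v * real (Suc t)) + (1 - q0) * (Psi H (D + - q0) + ?v * real (Suc t))
           = (q0 * Psi H (D + (1 - q0)) + (1 - q0) * Psi H (D + - q0)) + ?v * real (Suc t)"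
        by (simp add: algebra_simps)
      also have "\<dots> = Psi H D + ?v * real t" unfolding Psi_step by (simp add: algebra_simps)
      finally show ?thesis unfolding e q using ph by (simp add: s g2_def)
    qed
  qed
qed

end


context walk begin

definition "runR K H \<omega> n = st (updR K H) (0, 0, 0, 0) (pre Y n \<omega>)"

lemma runR_Suc: "runR K H \<omega> (Suc n) = updR K H (runR K H \<omega> n) (pre Y n \<omega>) (Y n \<omega>)"
  unfolding runR_def pre_Suc st_snoc ..

lemma runR_InvR: "1 \<le> K \<Longrightarrow> InvR K H (runR K H \<omega> n)"
  unfolding runR_def by (rule st_inv[of "InvR K H"]) (auto intro: InvR_0 InvR_step)

lemma Cw_Suc: "Cw \<omega> (Suc n) = (if act (pre Y n \<omega>) then Suc (Cw \<omega> n) else Cw \<omega> n)"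
  by (simp add: pre_Suc Cl_snoc)
lemma Sw_Suc: "Sw \<omega> (Suc n) = (if act (pre Y n \<omega>) \<and> Y n \<omega> then Suc (Sw \<omega> n) else Sw \<omega> n)"
  by (simp add: pre_Suc Sl_snoc)

lemma runR_inv:
  assumes K: "1 \<le> K"
    and hyp: "\<forall>m<n. act (pre Y m \<omega>) \<and> K \<le> Cw \<omega> (Suc m) \<longrightarrow> q0 * real (Cw \<omega> (Suc m)) < real (Sw \<omega> (Suc m))"
  shows "case runR K H \<omega> n of (k, D, ph, t) \<Rightarrow> ph \<le> 2 \<and>
     (ph \<le> 1 \<longrightarrow> k = Cw \<omega> n \<and> D = real (Sw \<omega> n) - q0 * real (Cw \<omega> n)) \<and>
     (ph = 0 \<longleftrightarrow> Cw \<omega> n < K) \<and> (ph = 1 \<longrightarrow> t + K = k) \<and> (ph = 0 \<longrightarrow> t = 0)"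
  using hyp
proof (induction n)
  case 0
  then show ?case using K by (simp add: runR_def Cl_def Sl_def)
next
  case (Suc n)
  obtain k D ph t where r: "runR K H \<omega> n = (k, D, ph, t)" by (cases "runR K H \<omega> n") auto
  have IH: "ph \<le> 2" "ph \<le> 1 \<Longrightarrow> k = Cw \<omega> n \<and> D = real (Sw \<omega> n) - q0 * real (Cw \<omega> n)"
     "ph = 0 \<longleftrightarrow> Cw \<omega> n < K" "ph = 1 \<Longrightarrow> t + K = k" "ph = 0 \<Longrightarrow> t = 0"
    using Suc.IH Suc.prems r by auto
  have h: "act (pre Y n \<omega>) \<Longrightarrow> K \<le> Cw \<omega> (Suc n) \<Longrightarrow> q0 * real (Cw \<omega> (Suc n)) < real (Sw \<omega> (Suc n))"
    using Suc.prems by auto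
  show ?case
  proof (cases "\<not> act (pre Y n \<omega>) \<or> 2 \<le> ph")
    case True
    have "Cw \<omega> n \<le> Cw \<omega> (Suc n)" by (simp add: Cw_Suc)
    with True IH show ?thesis by (auto simp: runR_Suc r updR_def Cw_Suc Sw_Suc)
  next
    case False
    then have a: "act (pre Y n \<omega>)" and ph: "ph \<le> 1" by auto
    have kD: "k = Cw \<omega> n" "D = real (Sw \<omega> n) - q0 * real (Cw \<omega> n)" using IH ph by auto
    define D' where "D' = D + (if Y n \<omega> then 1 - q0 else - q0)"
    have D': "D' = real (Sw \<omega> (Suc n)) - q0 * real (Cw \<omega> (Suc n))"
      using a kD by (auto simp: D'_def Cw_Suc Sw_Suc algebra_simps)
    have CS: "Cw \<omega> (Suc n) = Suc k" using a kD by (simp add: Cw_Suc)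
    have new: "runR K H \<omega> (Suc n) = (Suc k, D', (if ph = 0 \<and> Suc k < K then 0 else if D' \<le> 0 then 3 else if H \<le> D' then 2 else 1),
        (if ph = 0 then t else Suc t))"
      using a ph by (simp add: runR_Suc r updR_def Let_def D'_def)
    show ?thesis
    proof (cases "ph = 0 \<and> Suc k < K")
      case True
      then show ?thesis unfolding new using IH D' CS by simp
    next
      case False
      have KC: "K \<le> Cw \<omega> (Suc n)" using False IH ph kD CS by auto
      have pos: "0 < D'" using h[OF a KC] D' by simp
      have tt: "(if ph = 0 then t else Suc t) + K = Suc k"
        using IH ph False kD by (cases "ph = 0") auto
      have "\<not> D' \<le> 0" using pos by simp
      then show ?thesis unfolding new using D' CS tt KC False by auto
    qed
  qed
qed

lemma runR_mono:
  assumes "runR K H \<omega> n = (k, D, ph, t)" "runR K H \<omega> (Suc n) = (k', D', ph', t')"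
  shows "(ph = 2 \<longrightarrow> ph' = 2) \<and> (ph \<noteq> 0 \<longrightarrow> ph' \<noteq> 0 \<and> t \<le> t')"
  using assms by (auto simp: runR_Suc updR_def Let_def split: if_splits)

end


context walk begin

lemma g1_nn: "InvR K H s \<Longrightarrow> 0 < H \<Longrightarrow> 0 \<le> g1 K s"
  by (cases s) (auto simp: InvR_def g1_def)

lemma g2_ge: "InvR K H s \<Longrightarrow> 0 < H \<Longrightarrow> fst (snd (snd s)) \<noteq> 0 \<Longrightarrow> q0 * (1 - q0) * real (snd (snd (snd s))) \<le> g2 H s"
  using Psi_pos[of _ H] by (cases s) (auto simp: InvR_def g2_def less_imp_le)

lemma g2_nn: "InvR K H s \<Longrightarrow> 0 < H \<Longrightarrow> 0 \<le> g2 H s"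
proof -
  assume I: "InvR K H s" and H: "0 < H"
  show ?thesis
  proof (cases "fst (snd (snd s)) = 0")
    case True then show ?thesis by (cases s) (auto simp: g2_def)
  next
    case False
    have "0 \<le> q0 * (1 - q0) * real (snd (snd (snd s)))" using q0_01 by simp
    with g2_ge[OF I H False] show ?thesis by linarith
  qed
qed

theorem walk_R_K:
  assumes q0: "0 < q0" "q0 < 1" and K: "1 \<le> K"
  shows "AE \<omega> in M. \<not> ((\<forall>N. \<exists>n\<ge>N. act (pre Y n \<omega>)) \<and>
     (\<forall>n. act (pre Y n \<omega>) \<and> K \<le> Cw \<omega> (Suc n) \<longrightarrow> q0 * real (Cw \<omega> (Suc n)) < real (Sw \<omega> (Suc n))))"
proof -
  define v where "v = q0 * (1 - q0)"
  have v: "0 < v" using q0 by (simp add: v_def)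
  define A where "A j N = {\<omega>\<in>space M. fst (snd (snd (runR K (real j) \<omega> N))) = 2 \<or>
      (fst (snd (snd (runR K (real j) \<omega> N))) \<noteq> 0 \<and> j^3 \<le> snd (snd (snd (runR K (real j) \<omega> N))))}" for j N
  show ?thesis
  proof (rule AE_by_bounds[where A = A and C = "real K + 1 + 9 / v"])
    show "A j N \<in> sets M" for j N unfolding A_def runR_def by (rule pre_pred_sets)
    show "A j N \<subseteq> A j (Suc N)" for j N
    proof
      fix \<omega> assume "\<omega> \<in> A j N"
      moreover obtain k D ph t where r: "runR K (real j) \<omega> N = (k, D, ph, t)" by (cases "runR K (real j) \<omega> N") auto
      moreover obtain k' D' ph' t' where r': "runR K (real j) \<omega> (Suc N) = (k', D', ph', t')"
        by (cases "runR K (real j) \<omega> (Suc N)") auto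
      ultimately show "\<omega> \<in> A j (Suc N)" using runR_mono[OF r r'] unfolding A_def by auto
    qed
  next
    fix j N :: nat assume j: "1 \<le> j"
    define H where "H = real j"
    have H: "0 < H" using j by (simp add: H_def)
    define U where "U = {\<omega>\<in>space M. fst (snd (snd (st (updR K H) (0, 0, 0, 0) (pre Y N \<omega>)))) = 2}"
    define T where "T = {\<omega>\<in>space M. fst (snd (snd (st (updR K H) (0, 0, 0, 0) (pre Y N \<omega>)))) \<noteq> 0 \<and>
         j^3 \<le> snd (snd (snd (st (updR K H) (0, 0, 0, 0) (pre Y N \<omega>))))}"
    have sub: "A j N \<subseteq> U \<union> T" unfolding A_def U_def T_def runR_def H_def by auto
    have UT: "U \<in> sets M" "T \<in> sets M" unfolding U_def T_def by (rule pre_pred_sets)+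
    have pU: "prob U \<le> g1 K (0, 0, 0, 0) / (H + 1)"
      unfolding U_def
    proof (rule machine_bound_inv[where Inv = "InvR K H"])
      show "InvR K H (0, 0, 0, 0)" using K by (rule InvR_0)
      show "InvR K H (updR K H s ys b)" if "InvR K H s" for s ys b using that by (rule InvR_step)
      show "q ys * g1 K (updR K H s ys True) + (1 - q ys) * g1 K (updR K H s ys False) \<le> g1 K s"
        if "InvR K H s" for s ys using g1_loc[OF that H] .
      show "0 \<le> g1 K s" if "InvR K H s" for s using g1_nn[OF that H] .
      show "H + 1 \<le> g1 K s" if "InvR K H s" "fst (snd (snd s)) = 2" for s
        using that by (cases s) (auto simp: InvR_def g1_def)
      show "0 < H + 1" using H by simp
    qed
    have pT: "prob T \<le> g2 H (0, 0, 0, 0) / (v * real j^3)"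
      unfolding T_def
    proof (rule machine_bound_inv[where Inv = "InvR K H"])
      show "InvR K H (0, 0, 0, 0)" using K by (rule InvR_0)
      show "InvR K H (updR K H s ys b)" if "InvR K H s" for s ys b using that by (rule InvR_step)
      show "q ys * g2 H (updR K H s ys True) + (1 - q ys) * g2 H (updR K H s ys False) \<le> g2 H s"
        if "InvR K H s" for s ys using g2_loc[OF that H] .
      show "0 \<le> g2 H s" if "InvR K H s" for s using g2_nn[OF that H] .
      show "v * real j^3 \<le> g2 H s" if "InvR K H s" "fst (snd (snd s)) \<noteq> 0 \<and> j^3 \<le> snd (snd (snd s))" for s
      proof -
        have "v * real j^3 \<le> v * real (snd (snd (snd s)))"
          using that v by (intro mult_left_mono) (auto simp flip: of_nat_power)
        also have "\<dots> \<le> g2 H s" using g2_ge[OF that(1) H] that(2) by (simp add: v_def)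
        finally show ?thesis .
      qed
      show "0 < v * real j^3" using v j by simp
    qed
    have "prob (A j N) \<le> prob (U \<union> T)" using sub UT by (intro finite_measure_mono) auto
    also have "\<dots> \<le> prob U + prob T" using UT by (rule measure_Un_le)
    also have "\<dots> \<le> (real K + 1) / real j + 9 / v / real j"
    proof -
      have jp: "0 < real j" using j by simp
      have "g1 K (0, 0, 0, 0) / (H + 1) = (real K + 1) / (real j + 1)" by (simp add: g1_def H_def)
      also have "\<dots> \<le> (real K + 1) / real j" using jp by (intro divide_left_mono) auto
      finally have a: "prob U \<le> (real K + 1) / real j" using pU by linarith
      have "(real j + 2)^2 \<le> 9 * (real j)^2"
      proof -
        have "real j + 2 \<le> 3 * real j" using j by simp
        then have "(real j + 2)^2 \<le> (3 * real j)^2" by (intro power_mono) auto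
        thus ?thesis by (simp add: power_mult_distrib)
      qed
      then have "(real j + 2)^2 / (v * real j^3) \<le> 9 * (real j)^2 / (v * real j^3)"
        using v jp by (intro divide_right_mono) auto
      also have "9 * (real j)^2 / (v * real j^3) = 9 / v / real j"
        using v jp by (simp add: field_simps power2_eq_square power3_eq_cube)
      finally have b: "prob T \<le> 9 / v / real j" using pT by (simp add: g2_def H_def)
      from a b show ?thesis by linarith
    qed
    also have "\<dots> = (real K + 1 + 9 / v) / real j" by (simp add: add_divide_distrib)
    finally show "prob (A j N) \<le> (real K + 1 + 9 / v) / real j" .
  next
    fix \<omega> and j :: nat
    assume w: "\<omega> \<in> space M" and nP: "\<not> \<not> ((\<forall>N. \<exists>n\<ge>N. act (pre Y n \<omega>)) \<and>
     (\<forall>n. act (pre Y n \<omega>) \<and> K \<le> Cw \<omega> (Suc n) \<longrightarrow> q0 * real (Cw \<omega> (Suc n)) < real (Sw \<omega> (Suc n))))"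
    then have io: "\<forall>N. \<exists>n\<ge>N. act (pre Y n \<omega>)"
      and hyp: "\<forall>n. act (pre Y n \<omega>) \<and> K \<le> Cw \<omega> (Suc n) \<longrightarrow> q0 * real (Cw \<omega> (Suc n)) < real (Sw \<omega> (Suc n))"
      by auto
    obtain N where N: "K + j^3 \<le> Cw \<omega> N" using Cw_unbounded[OF io] by blast
    obtain k D ph t where r: "runR K (real j) \<omega> N = (k, D, ph, t)" by (cases "runR K (real j) \<omega> N") auto
    have "case runR K (real j) \<omega> N of (k, D, ph, t) \<Rightarrow> ph \<le> 2 \<and>
     (ph \<le> 1 \<longrightarrow> k = Cw \<omega> N \<and> D = real (Sw \<omega> N) - q0 * real (Cw \<omega> N)) \<and>
     (ph = 0 \<longleftrightarrow> Cw \<omega> N < K) \<and> (ph = 1 \<longrightarrow> t + K = k) \<and> (ph = 0 \<longrightarrow> t = 0)"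
      by (rule runR_inv[OF K]) (use hyp in auto)
    then have "ph = 2 \<or> (ph \<noteq> 0 \<and> j^3 \<le> t)" using r N by auto
    then have "\<omega> \<in> A j N" using w r unfolding A_def by auto
    then show "\<exists>n. \<omega> \<in> A j n" by blast
  qed
qed

end


context walk begin

lemma Sl_le_Cl: "Sl ys \<le> Cl ys"
  by (induction ys rule: rev_induct) (auto simp: Sl_snoc Cl_snoc, simp add: Sl_def Cl_def)

lemma AE_zero_prob:
  assumes "prob {\<omega>\<in>space M. P (pre Y N \<omega>)} = 0"
  shows "AE \<omega> in M. \<not> P (pre Y N \<omega>)"
proof (rule AE_I')
  show "{\<omega>\<in>space M. P (pre Y N \<omega>)} \<in> null_sets M"
    using assms pre_pred_sets by (auto simp: emeasure_eq_measure)
qed auto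

lemma Sw_zero:
  assumes "q0 = 0"
  shows "AE \<omega> in M. \<forall>N. Sw \<omega> N = 0"
proof -
  define upd where "upd f ys b = (f \<or> (act ys \<and> b))" for f :: bool and ys and b :: bool
  define g where "g f = (if f then 1 else 0 :: real)" for f
  have fl: "st upd False ys = (0 < Sl ys)" for ys
    by (induction ys rule: rev_induct) (auto simp: st_snoc Sl_snoc upd_def Sl_def)
  have "AE \<omega> in M. \<not> st upd False (pre Y N \<omega>)" for N
  proof (rule AE_zero_prob)
    have "prob {\<omega>\<in>space M. st upd False (pre Y N \<omega>)} \<le> g False / 1"
    proof (rule machine_bound)
      show "q ys * g (upd s ys True) + (1 - q ys) * g (upd s ys False) \<le> g s" for s ys
        using q_act[of ys] assms by (cases "act ys") (auto simp: upd_def g_def)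
    qed (auto simp: g_def)
    then show "prob {\<omega>\<in>space M. st upd False (pre Y N \<omega>)} = 0"
      using measure_nonneg[of M] by (simp add: g_def) (meson measure_nonneg order_antisym)
  qed
  then have "AE \<omega> in M. \<forall>N. \<not> st upd False (pre Y N \<omega>)" by (simp add: AE_all_countable)
  then show ?thesis by eventually_elim (simp add: fl)
qed

theorem walk_R:
  "AE \<omega> in M. (\<forall>N. \<exists>n\<ge>N. act (pre Y n \<omega>)) \<longrightarrow>
      (\<forall>N. \<exists>n\<ge>N. act (pre Y n \<omega>) \<and> real (Sw \<omega> (Suc n)) \<le> q0 * real (Cw \<omega> (Suc n)))"
proof (cases "q0 = 1")
  case True
  show ?thesis
  proof (rule AE_I2, intro impI allI)
    fix \<omega> N assume "\<forall>N. \<exists>n\<ge>N. act (pre Y n \<omega>)"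
    then obtain n where "n \<ge> N" "act (pre Y n \<omega>)" by blast
    moreover have "real (Sw \<omega> (Suc n)) \<le> q0 * real (Cw \<omega> (Suc n))" using True Sl_le_Cl by simp
    ultimately show "\<exists>n\<ge>N. act (pre Y n \<omega>) \<and> real (Sw \<omega> (Suc n)) \<le> q0 * real (Cw \<omega> (Suc n))" by blast
  qed
next
  case q1: False
  show ?thesis
  proof (cases "q0 = 0")
    case True
    show ?thesis using Sw_zero[OF True]
    proof eventually_elim
      case (elim \<omega>)
      show ?case
      proof (intro impI allI)
        fix N assume "\<forall>N. \<exists>n\<ge>N. act (pre Y n \<omega>)"
        then obtain n where "n \<ge> N" "act (pre Y n \<omega>)" by blast
        then show "\<exists>n\<ge>N. act (pre Y n \<omega>) \<and> real (Sw \<omega> (Suc n)) \<le> q0 * real (Cw \<omega> (Suc n))"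
          using elim True by auto
      qed
    qed
  next
    case False
    then have q: "0 < q0" "q0 < 1" using q0_01 q1 by auto
    have "AE \<omega> in M. \<forall>K. 1 \<le> K \<longrightarrow> \<not> ((\<forall>N. \<exists>n\<ge>N. act (pre Y n \<omega>)) \<and>
      (\<forall>n. act (pre Y n \<omega>) \<and> K \<le> Cw \<omega> (Suc n) \<longrightarrow> q0 * real (Cw \<omega> (Suc n)) < real (Sw \<omega> (Suc n))))"
      unfolding AE_all_countable using walk_R_K[OF q] by (auto intro: AE_I2 simp: AE_all_countable)
    then show ?thesis
    proof eventually_elim
      case (elim \<omega>)
      show ?case
      proof (intro impI allI, rule ccontr)
        fix N assume io: "\<forall>N. \<exists>n\<ge>N. act (pre Y n \<omega>)"
          and nc: "\<not> (\<exists>n\<ge>N. act (pre Y n \<omega>) \<and> real (Sw \<omega> (Suc n)) \<le> q0 * real (Cw \<omega> (Suc n)))"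
        define K where "K = Suc (Cw \<omega> N)"
        have "\<forall>n. act (pre Y n \<omega>) \<and> K \<le> Cw \<omega> (Suc n) \<longrightarrow> q0 * real (Cw \<omega> (Suc n)) < real (Sw \<omega> (Suc n))"
        proof (intro allI impI)
          fix n assume a: "act (pre Y n \<omega>) \<and> K \<le> Cw \<omega> (Suc n)"
          have "n \<ge> N"
          proof (rule ccontr)
            assume "\<not> n \<ge> N"
            then have "Cw \<omega> (Suc n) \<le> Cw \<omega> N" by (intro Cw_mono) simp
            with a show False unfolding K_def by simp
          qed
          with a nc show "q0 * real (Cw \<omega> (Suc n)) < real (Sw \<omega> (Suc n))" by auto
        qed
        with elim io show False unfolding K_def by auto
      qed
    qed
  qed
qed

end


lemma pre_neg: "pre (\<lambda>i \<omega>. \<not> Y i \<omega>) n \<omega> = map Not (pre Y n \<omega>)"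
  by (simp add: pre_def)

lemma map_Not_Not: "map Not (map Not xs) = xs" by (induction xs) auto
lemma map_Not_eq: "(map Not xs = ys) = (xs = map Not ys)"
  using map_Not_Not by metis

context walk begin

lemma neg_walk: "walk M (\<lambda>i \<omega>. \<not> Y i \<omega>) (\<lambda>ys. 1 - q (map Not ys)) (\<lambda>ys. act (map Not ys)) (1 - q0)"
proof -
  have "tree_model M (\<lambda>i \<omega>. \<not> Y i \<omega>) (\<lambda>ys. 1 - q (map Not ys))"
  proof
    show "(\<lambda>\<omega>. \<not> Y i \<omega>) \<in> measurable M (count_space UNIV)" for i
      using Ymeas[of i] by (rule measurable_compose[where f="Y i" and g=Not]) simp
    show "0 \<le> 1 - q (map Not ys) \<and> 1 - q (map Not ys) \<le> 1" for ys using q01[of "map Not ys"] by auto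
    fix ys :: "bool list"
    define zs where "zs = map Not ys"
    have lz: "length zs = length ys" by (simp add: zs_def)
    have e1: "{\<omega>\<in>space M. pre (\<lambda>i \<omega>. \<not> Y i \<omega>) (length ys) \<omega> = ys} = {\<omega>\<in>space M. pre Y (length zs) \<omega> = zs}"
      by (auto simp: pre_neg map_Not_eq zs_def)
    have e2: "{\<omega>\<in>space M. pre (\<lambda>i \<omega>. \<not> Y i \<omega>) (length ys) \<omega> = ys \<and> \<not> Y (length ys) \<omega>}
       = {\<omega>\<in>space M. pre Y (length zs) \<omega> = zs} - {\<omega>\<in>space M. pre Y (length zs) \<omega> = zs \<and> Y (length zs) \<omega>}"
      by (auto simp: pre_neg map_Not_eq zs_def)
    have s2: "{\<omega>\<in>space M. pre Y (length zs) \<omega> = zs \<and> Y (length zs) \<omega>} \<in> sets M"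
      using pre_pred_sets[of "\<lambda>x. x = zs" "length zs"] Y_sets[of "length zs" True]
      by (auto simp: Collect_conj_eq[symmetric] Int_def)
    have "prob {\<omega>\<in>space M. pre (\<lambda>i \<omega>. \<not> Y i \<omega>) (length ys) \<omega> = ys \<and> \<not> Y (length ys) \<omega>}
      = prob {\<omega>\<in>space M. pre Y (length zs) \<omega> = zs} - q zs * prob {\<omega>\<in>space M. pre Y (length zs) \<omega> = zs}"
      unfolding e2 using s2 pre_sets law[of zs] by (subst finite_measure_Diff) auto
    then show "prob {\<omega>\<in>space M. pre (\<lambda>i \<omega>. \<not> Y i \<omega>) (length ys) \<omega> = ys \<and> \<not> Y (length ys) \<omega>}
      = (1 - q (map Not ys)) * prob {\<omega>\<in>space M. pre (\<lambda>i \<omega>. \<not> Y i \<omega>) (length ys) \<omega> = ys}"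
      unfolding e1 by (simp add: zs_def algebra_simps)
  qed
  then show ?thesis
    by (rule walk.intro) (unfold_locales, use q_act q0_01 in auto)
qed

end




context walk begin

lemma act_neg: "act (map Not (pre (\<lambda>i \<omega>. \<not> Y i \<omega>) n \<omega>)) = act (pre Y n \<omega>)"
  unfolding pre_neg map_Not_Not ..

lemma neg_counts:
  "walk.Cl (\<lambda>ys. act (map Not ys)) (pre (\<lambda>i \<omega>. \<not> Y i \<omega>) n \<omega>) = Cw \<omega> n \<and>
   walk.Sl (\<lambda>ys. act (map Not ys)) (pre (\<lambda>i \<omega>. \<not> Y i \<omega>) n \<omega>) = Cw \<omega> n - Sw \<omega> n"
proof -
  interpret N: walk M "\<lambda>i \<omega>. \<not> Y i \<omega>" "\<lambda>ys. 1 - q (map Not ys)" "\<lambda>ys. act (map Not ys)" "1 - q0"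
    by (rule neg_walk)
  show ?thesis
  proof (induction n)
    case 0 then show ?case by (simp add: N.Cl_def N.Sl_def Cl_def Sl_def)
  next
    case (Suc n)
    have le: "Sw \<omega> n \<le> Cw \<omega> n" by (rule Sl_le_Cl)
    show ?case using Suc le
      by (auto simp: pre_Suc N.Cl_snoc N.Sl_snoc Cl_snoc Sl_snoc pre_neg[symmetric] act_neg Suc_diff_le)
  qed
qed

theorem walk_L':
  assumes c: "c < q0"
  shows "AE \<omega> in M. \<not> (\<forall>N. \<exists>n\<ge>N. act (pre Y n \<omega>) \<and> real (Sw \<omega> (Suc n)) \<le> c * real (Cw \<omega> (Suc n)))"
proof -
  interpret N: walk M "\<lambda>i \<omega>. \<not> Y i \<omega>" "\<lambda>ys. 1 - q (map Not ys)" "\<lambda>ys. act (map Not ys)" "1 - q0"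
    by (rule neg_walk)
  have "1 - q0 < 1 - c" using c by simp
  from N.walk_L[OF this] show ?thesis
  proof eventually_elim
    case (elim \<omega>)
    have eq: "((1 - c) * real (N.Cw \<omega> (Suc n)) \<le> real (N.Sw \<omega> (Suc n))) =
        (real (Sw \<omega> (Suc n)) \<le> c * real (Cw \<omega> (Suc n)))" for n
    proof -
      have le: "Sw \<omega> (Suc n) \<le> Cw \<omega> (Suc n)" by (rule Sl_le_Cl)
      show ?thesis using neg_counts[of "Suc n" \<omega>] le by (simp add: of_nat_diff algebra_simps)
    qed
    show ?case using elim unfolding eq act_neg .
  qed
qed

theorem walk_R':
  "AE \<omega> in M. (\<forall>N. \<exists>n\<ge>N. act (pre Y n \<omega>)) \<longrightarrow>
      (\<forall>N. \<exists>n\<ge>N. act (pre Y n \<omega>) \<and> q0 * real (Cw \<omega> (Suc n)) \<le> real (Sw \<omega> (Suc n)))"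
proof -
  interpret N: walk M "\<lambda>i \<omega>. \<not> Y i \<omega>" "\<lambda>ys. 1 - q (map Not ys)" "\<lambda>ys. act (map Not ys)" "1 - q0"
    by (rule neg_walk)
  from N.walk_R show ?thesis
  proof eventually_elim
    case (elim \<omega>)
    have eq: "(real (N.Sw \<omega> (Suc n)) \<le> (1 - q0) * real (N.Cw \<omega> (Suc n))) =
        (q0 * real (Cw \<omega> (Suc n)) \<le> real (Sw \<omega> (Suc n)))" for n
    proof -
      have le: "Sw \<omega> (Suc n) \<le> Cw \<omega> (Suc n)" by (rule Sl_le_Cl)
      show ?thesis using neg_counts[of "Suc n" \<omega>] le by (simp add: of_nat_diff algebra_simps)
    qed
    show ?case using elim unfolding eq act_neg .
  qed
qed

end


lemma length_allocs[simp]: "length (allocs m p dp1 dp2 x0 y n) = Suc n"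
  by (induction n) auto

lemma take_allocs: "i \<le> n \<Longrightarrow> take (Suc i) (allocs m p dp1 dp2 x0 y n) = allocs m p dp1 dp2 x0 y i"
proof (induction n)
  case 0 then show ?case by simp
next
  case (Suc n)
  show ?case
  proof (cases "i = Suc n")
    case True then show ?thesis by simp
  next
    case False
    then have "i \<le> n" using Suc.prems by simp
    then show ?thesis using Suc.IH by simp
  qed
qed

lemma allocs_nth: "i \<le> n \<Longrightarrow> allocs m p dp1 dp2 x0 y n ! i = alloc m p dp1 dp2 x0 y i"
proof -
  assume i: "i \<le> n"
  have "allocs m p dp1 dp2 x0 y n ! i = take (Suc i) (allocs m p dp1 dp2 x0 y n) ! i" by simp
  also have "\<dots> = allocs m p dp1 dp2 x0 y i ! i" using take_allocs[OF i] by simp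
  also have "\<dots> = alloc m p dp1 dp2 x0 y i" by (simp add: alloc_def)
  finally show ?thesis .
qed

lemma tox_freq_cong: "(\<And>i. i < length xs \<Longrightarrow> y i = y' i) \<Longrightarrow> tox_freq xs y u = tox_freq xs y' u"
  unfolding tox_freq_def by (intro arg_cong2[where f="(/)"] arg_cong[where f=real] arg_cong[where f=card]) auto

lemma allocs_cong: "(\<And>i. i < n \<Longrightarrow> y i = y' i) \<Longrightarrow> allocs m p dp1 dp2 x0 y n = allocs m p dp1 dp2 x0 y' n"
proof (induction n)
  case 0 then show ?case by simp
next
  case (Suc n)
  then have a: "allocs m p dp1 dp2 x0 y n = allocs m p dp1 dp2 x0 y' n" by simp
  have "tox_freq (allocs m p dp1 dp2 x0 y n) y u = tox_freq (allocs m p dp1 dp2 x0 y n) y' u" for u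
    by (rule tox_freq_cong) (use Suc.prems in simp)
  then show ?case using a by (simp add: next_dose_def Let_def)
qed

lemma alloc_cong: "(\<And>i. i < n \<Longrightarrow> y i = y' i) \<Longrightarrow> alloc m p dp1 dp2 x0 y n = alloc m p dp1 dp2 x0 y' n"
  unfolding alloc_def using allocs_cong by metis

lemma alloc_Suc: "alloc m p dp1 dp2 x0 y (Suc n) = next_dose m p dp1 dp2 (allocs m p dp1 dp2 x0 y n) y"
  by (simp add: alloc_def nth_append)

lemma last_allocs: "last (allocs m p dp1 dp2 x0 y n) = alloc m p dp1 dp2 x0 y n"
  by (cases n) (simp_all add: alloc_def nth_append)

lemma card_lessSuc: "card {i. i < Suc n \<and> P i} = (if P n then Suc (card {i. i < n \<and> P i}) else card {i. i < n \<and> P i})"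
proof -
  have "{i. i < Suc n \<and> P i} = {i. i < n \<and> P i} \<union> (if P n then {n} else {})" by (auto simp: less_Suc_eq)
  then show ?thesis by auto
qed

lemma tox_freq_alloc:
  "tox_freq (allocs m p dp1 dp2 x0 y n) y u =
     real (card {i. i < Suc n \<and> alloc m p dp1 dp2 x0 y i = u \<and> y i}) / real (card {i. i < Suc n \<and> alloc m p dp1 dp2 x0 y i = u})"
proof -
  have "{i. i < Suc n \<and> allocs m p dp1 dp2 x0 y n ! i = u \<and> y i} = {i. i < Suc n \<and> alloc m p dp1 dp2 x0 y i = u \<and> y i}"
    "{i. i < Suc n \<and> allocs m p dp1 dp2 x0 y n ! i = u} = {i. i < Suc n \<and> alloc m p dp1 dp2 x0 y i = u}"
    by (auto simp: allocs_nth)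
  then show ?thesis unfolding tox_freq_def by simp
qed


locale det =
  fixes x :: "nat \<Rightarrow> nat" and e :: "nat \<Rightarrow> real" and m :: nat and lo hi :: real and f :: "nat \<Rightarrow> real"
  assumes m: "1 \<le> m" and x0: "x 0 < m" and lohi: "lo < hi"
    and xs: "\<And>n. x (Suc n) = (if e n \<le> lo then (if x n + 1 < m then x n + 1 else m - 1)
                 else if hi \<le> e n then (if x n = 0 then 0 else x n - 1) else x n)"
    and fmono: "\<And>i j. i < j \<Longrightarrow> j < m \<Longrightarrow> f i < f j"
    and F1: "\<And>u c. u < m \<Longrightarrow> c \<in> {lo, hi} \<Longrightarrow> f u < c \<Longrightarrow> \<exists>N. \<forall>n\<ge>N. x n = u \<longrightarrow> e n < c"
    and F2: "\<And>u c. u < m \<Longrightarrow> c \<in> {lo, hi} \<Longrightarrow> c < f u \<Longrightarrow> \<exists>N. \<forall>n\<ge>N. x n = u \<longrightarrow> c < e n"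
    and F3: "\<And>u c. u < m \<Longrightarrow> c \<in> {lo, hi} \<Longrightarrow> f u = c \<Longrightarrow> (\<forall>N. \<exists>n\<ge>N. x n = u) \<Longrightarrow> \<forall>N. \<exists>n\<ge>N. x n = u \<and> e n \<le> c"
    and F4: "\<And>u c. u < m \<Longrightarrow> c \<in> {lo, hi} \<Longrightarrow> f u = c \<Longrightarrow> (\<forall>N. \<exists>n\<ge>N. x n = u) \<Longrightarrow> \<forall>N. \<exists>n\<ge>N. x n = u \<and> c \<le> e n"
begin

definition "vis u = (\<forall>N. \<exists>n\<ge>N. x n = u)"

lemma xlt: "x n < m"
  using x0 m by (induction n) (auto simp: xs)

lemma step_le: "x (Suc n) \<le> x n + 1" "x n \<le> x (Suc n) + 1"
  using xlt[of n] by (auto simp: xs)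

lemma up_move: "x n = u \<Longrightarrow> e n \<le> lo \<Longrightarrow> u + 1 < m \<Longrightarrow> x (Suc n) = u + 1"
  by (simp add: xs)

lemma down_move: "x n = u \<Longrightarrow> hi \<le> e n \<Longrightarrow> 0 < u \<Longrightarrow> x (Suc n) = u - 1"
  using lohi by (simp add: xs)

lemma stay_move: "x n = u \<Longrightarrow> lo < e n \<Longrightarrow> e n < hi \<Longrightarrow> x (Suc n) = u"
  by (simp add: xs)

lemma nodown_move: "x n = u \<Longrightarrow> e n < hi \<Longrightarrow> u \<le> x (Suc n)"
  using xlt[of n] by (auto simp: xs)

lemma noup_move: "x n = u \<Longrightarrow> lo < e n \<Longrightarrow> x (Suc n) \<le> u"
  using xlt[of n] by (auto simp: xs)

lemma eventually_in:
  assumes "\<And>u. u < m \<Longrightarrow> u \<notin> S \<Longrightarrow> \<not> vis u"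
  shows "\<exists>N. \<forall>n\<ge>N. x n \<in> S"
proof -
  have "\<forall>u. \<exists>N. u < m \<and> u \<notin> S \<longrightarrow> (\<forall>n\<ge>N. x n \<noteq> u)"
    using assms unfolding vis_def by blast
  then obtain Nf where Nf: "\<And>u n. u < m \<Longrightarrow> u \<notin> S \<Longrightarrow> n \<ge> Nf u \<Longrightarrow> x n \<noteq> u" by metis
  define N where "N = (\<Sum>u<m. Nf u)"
  have "x n \<in> S" if "n \<ge> N" for n
  proof (rule ccontr)
    assume nS: "x n \<notin> S"
    have "Nf (x n) \<le> N" unfolding N_def using xlt[of n] by (intro member_le_sum) auto
    then have "Nf (x n) \<le> n" using that by linarith
    from Nf[OF xlt nS this] show False by simp
  qed
  then show ?thesis by blast
qed

lemma vis_ex: "\<exists>u<m. vis u"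
proof (rule ccontr)
  assume "\<not> (\<exists>u<m. vis u)"
  then obtain N where "\<forall>n\<ge>N. x n \<in> {}" using eventually_in[of "{}"] by blast
  then show False by auto
qed

lemma not_vis:
  assumes "\<exists>N. \<forall>n\<ge>N. x (Suc n) \<noteq> a" shows "\<not> vis a"
proof
  obtain N where N: "\<forall>n\<ge>N. x (Suc n) \<noteq> a" using assms by blast
  assume "vis a"
  then obtain n where n: "n \<ge> Suc N" "x n = a" unfolding vis_def by blast
  then obtain k where k: "n = Suc k" by (cases n) auto
  with n N show False by auto
qed

lemma up_io:
  assumes u: "u < m" "vis u" "f u \<le> lo"
  shows "\<forall>N. \<exists>n\<ge>N. x n = u \<and> e n \<le> lo"
proof (cases "f u = lo")
  case True then show ?thesis using F3[of u lo] u unfolding vis_def by auto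
next
  case False
  then have "f u < lo" using u by simp
  then obtain N0 where N0: "\<forall>n\<ge>N0. x n = u \<longrightarrow> e n < lo" using F1[of u lo] u by auto
  show ?thesis
  proof
    fix N
    obtain n where "n \<ge> max N N0" "x n = u" using u unfolding vis_def by blast
    then show "\<exists>n\<ge>N. x n = u \<and> e n \<le> lo" using N0 by (intro exI[of _ n]) auto
  qed
qed

lemma down_io:
  assumes u: "u < m" "vis u" "hi \<le> f u"
  shows "\<forall>N. \<exists>n\<ge>N. x n = u \<and> hi \<le> e n"
proof (cases "f u = hi")
  case True then show ?thesis using F4[of u hi] u unfolding vis_def by auto
next
  case False
  then have "hi < f u" using u by simp
  then obtain N0 where N0: "\<forall>n\<ge>N0. x n = u \<longrightarrow> hi < e n" using F2[of u hi] u by auto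
  show ?thesis
  proof
    fix N
    obtain n where "n \<ge> max N N0" "x n = u" using u unfolding vis_def by blast
    then show "\<exists>n\<ge>N. x n = u \<and> hi \<le> e n" using N0 by (intro exI[of _ n]) auto
  qed
qed

lemma vis_up:
  assumes "u < m" "vis u" "f u \<le> lo" "u + 1 < m"
  shows "vis (u + 1)"
  unfolding vis_def
proof
  fix N
  obtain n where "n \<ge> N" "x n = u" "e n \<le> lo" using up_io[OF assms(1-3)] by blast
  then show "\<exists>n\<ge>N. x n = u + 1" using up_move[of n u] assms(4) by (intro exI[of _ "Suc n"]) auto
qed

lemma vis_down:
  assumes "u < m" "vis u" "hi \<le> f u" "0 < u"
  shows "vis (u - 1)"
  unfolding vis_def
proof
  fix N
  obtain n where "n \<ge> N" "x n = u" "hi \<le> e n" using down_io[OF assms(1-3)] by blast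
  then show "\<exists>n\<ge>N. x n = u - 1" using down_move[of n u] assms(4) by (intro exI[of _ "Suc n"]) auto
qed

lemma absorb:
  assumes v: "v < m" "vis v" "lo < f v" "f v < hi"
  shows "\<exists>N. \<forall>i\<ge>N. x i = v"
proof -
  obtain N1 where N1: "\<forall>n\<ge>N1. x n = v \<longrightarrow> lo < e n" using F2[of v lo] v by auto
  obtain N2 where N2: "\<forall>n\<ge>N2. x n = v \<longrightarrow> e n < hi" using F1[of v hi] v by auto
  obtain n0 where n0: "n0 \<ge> max N1 N2" "x n0 = v" using v unfolding vis_def by blast
  have "x (n0 + k) = v" for k
  proof (induction k)
    case 0 then show ?case using n0 by simp
  next
    case (Suc k)
    then show ?case using N1 N2 n0 stay_move[of "n0 + k" v] by auto
  qed
  show ?thesis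
  proof (intro exI allI impI)
    fix i assume i: "n0 \<le> i"
    have "x (n0 + (i - n0)) = v" by fact
    then show "x i = v" using i by simp
  qed
qed

lemma f_less_imp:
  assumes "i < m" "j < m" "f i < f j" shows "i < j"
proof (rule ccontr)
  assume "\<not> i < j"
  then have "j < i \<or> j = i" by auto
  then show False using fmono[of j i] assms by auto
qed

lemma f_le_mono: "i \<le> j \<Longrightarrow> j < m \<Longrightarrow> f i \<le> f j"
  using fmono[of i j] by (cases "i = j") auto

theorem partI:
  assumes noint: "\<forall>u<m. \<not> (lo < f u \<and> f u < hi)"
    and j: "j + 1 < m" "f j \<le> lo" "hi \<le> f (j + 1)"
  shows "(\<exists>N. \<forall>i\<ge>N. x i \<in> {j, j + 1}) \<and> vis j \<and> vis (j + 1)"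
proof -
  have low: "\<not> vis u" if "u < j" for u
  proof
    assume vu: "vis u"
    define a where "a = (LEAST u. vis u)"
    have va: "vis a" unfolding a_def using vu by (rule LeastI)
    have au: "a \<le> u" unfolding a_def using vu by (rule Least_le)
    have aj: "a < j" using au that by simp
    have fa: "f a < lo" using fmono[of a j] aj j by simp
    obtain N1 where N1: "\<forall>n\<ge>N1. x n = a \<longrightarrow> e n < lo" using F1[of a lo] fa aj j by auto
    have fa1: "f (a + 1) < hi" using f_le_mono[of "a + 1" j] aj j lohi by simp
    obtain N2 where N2: "\<forall>n\<ge>N2. x n = a + 1 \<longrightarrow> e n < hi" using F1[of "a + 1" hi] fa1 aj j by auto
    have "\<exists>N3. \<forall>n\<ge>N3. 0 < a \<longrightarrow> x n \<noteq> a - 1"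
    proof (cases "0 < a")
      case True
      have "\<not> vis (a - 1)" using True not_less_Least[of "a - 1" vis] unfolding a_def[symmetric] by simp
      then show ?thesis unfolding vis_def by auto
    qed auto
    then obtain N3 where N3: "\<forall>n\<ge>N3. 0 < a \<longrightarrow> x n \<noteq> a - 1" by blast
    have "\<forall>n\<ge>max N1 (max N2 N3). x (Suc n) \<noteq> a"
    proof (intro allI impI)
      fix n assume n: "n \<ge> max N1 (max N2 N3)"
      show "x (Suc n) \<noteq> a"
      proof (cases "x n = a")
        case True then show ?thesis using N1 n up_move[of n a] aj j by auto
      next
        case f1: False
        show ?thesis
        proof (cases "x n = a + 1")
          case True then show ?thesis using N2 n nodown_move[of n "a + 1"] by fastforce
        next
          case False
          have "0 < a \<longrightarrow> x n \<noteq> a - 1" using N3 n by auto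
          then show ?thesis using f1 False step_le[of n] by linarith
        qed
      qed
    qed
    then have "\<not> vis a" by (intro not_vis) blast
    with va show False by simp
  qed
  have high: "\<not> vis u" if "j + 1 < u" "u < m" for u
  proof
    assume vu: "vis u"
    define B where "B = {u. u < m \<and> vis u \<and> j + 1 < u}"
    have finB: "finite B" unfolding B_def by auto
    have uB: "u \<in> B" using vu that unfolding B_def by simp
    define b where "b = Max B"
    have bB: "b \<in> B" unfolding b_def using finB uB by (intro Max_in) auto
    then have b: "b < m" "vis b" "j + 1 < b" unfolding B_def by auto
    have bmax: "\<not> vis (b + 1)"
    proof
      assume vb: "vis (b + 1)"
      obtain n where "x n = b + 1" using vb unfolding vis_def by blast
      then have bm: "b + 1 < m" using xlt[of n] by simp
      then have "b + 1 \<in> B" using b vb unfolding B_def by auto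
      then have "b + 1 \<le> b" unfolding b_def by (rule Max_ge[OF finB])
      then show False by simp
    qed
    have fb: "hi < f b" using fmono[of "j + 1" b] b j by simp
    obtain N1 where N1: "\<forall>n\<ge>N1. x n = b \<longrightarrow> hi < e n" using F2[of b hi] fb b by auto
    have "j + 1 \<le> b - 1" "b - 1 < m" using b by auto
    then have fb1: "lo < f (b - 1)" using f_le_mono[of "j + 1" "b - 1"] j lohi by simp
    obtain N2 where N2: "\<forall>n\<ge>N2. x n = b - 1 \<longrightarrow> lo < e n" using F2[of "b - 1" lo] fb1 \<open>b - 1 < m\<close> by auto
    obtain N3 where N3: "\<forall>n\<ge>N3. x n \<noteq> b + 1" using bmax unfolding vis_def by auto
    have "\<forall>n\<ge>max N1 (max N2 N3). x (Suc n) \<noteq> b"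
    proof (intro allI impI)
      fix n assume n: "n \<ge> max N1 (max N2 N3)"
      show "x (Suc n) \<noteq> b"
      proof (cases "x n = b")
        case True then show ?thesis using N1 n down_move[of n b] b by fastforce
      next
        case f1: False
        show ?thesis
        proof (cases "x n = b - 1")
          case True then show ?thesis using N2 n noup_move[of n "b - 1"] b by fastforce
        next
          case False
          have "x n \<noteq> b + 1" using N3 n by auto
          then show ?thesis using f1 False step_le[of n] b by linarith
        qed
      qed
    qed
    then have "\<not> vis b" by (intro not_vis) blast
    with b show False by simp
  qed
  have ev: "\<exists>N. \<forall>i\<ge>N. x i \<in> {j, j + 1}"
  proof (rule eventually_in)
    fix u assume "u < m" "u \<notin> {j, j + 1}"
    then show "\<not> vis u" using low high by (cases "u < j") auto
  qed
  obtain u where u: "u < m" "vis u" using vis_ex by blast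
  have "\<not> u < j" using low u by blast
  moreover have "\<not> j + 1 < u" using high u by blast
  ultimately have uj: "u = j \<or> u = j + 1" by linarith
  from uj have both: "vis j \<and> vis (j + 1)"
  proof (elim disjE)
    assume "u = j"
    then have "vis j" using u by simp
    moreover have "vis (j + 1)" using vis_up[of j] \<open>vis j\<close> j by simp
    ultimately show ?thesis by simp
  next
    assume "u = j + 1"
    then have "vis (j + 1)" using u by simp
    moreover have "vis j" using vis_down[of "j + 1"] \<open>vis (j + 1)\<close> j by simp
    ultimately show ?thesis by simp
  qed
  show ?thesis using ev both by simp
qed

theorem partII:
  assumes v0: "v0 < m" "lo < f v0" "f v0 < hi"
  shows "\<exists>v<m. lo < f v \<and> f v < hi \<and> (\<exists>N. \<forall>i\<ge>N. x i = v)"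
proof -
  have "\<exists>v<m. vis v \<and> lo < f v \<and> f v < hi"
  proof (rule ccontr)
    assume none: "\<not> (\<exists>v<m. vis v \<and> lo < f v \<and> f v < hi)"
    define B where "B = {u. u < m \<and> vis u \<and> f u \<le> lo}"
    show False
    proof (cases "B = {}")
      case False
      have finB: "finite B" unfolding B_def by auto
      define c where "c = Max B"
      have "c \<in> B" unfolding c_def using finB False by (rule Max_in)
      then have c: "c < m" "vis c" "f c \<le> lo" unfolding B_def by auto
      have cv: "c < v0" using f_less_imp[of c v0] c v0 by simp
      have vc1: "vis (c + 1)" using vis_up[OF c] cv v0 by simp
      have "\<not> f (c + 1) \<le> lo"
      proof
        assume "f (c + 1) \<le> lo"
        then have "c + 1 \<in> B" using vc1 cv v0 unfolding B_def by simp
        then have "c + 1 \<le> c" unfolding c_def by (rule Max_ge[OF finB])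
        then show False by simp
      qed
      have "c + 1 < m" using cv v0 by simp
      then have "\<not> (lo < f (c + 1) \<and> f (c + 1) < hi)" using none vc1 by blast
      then have "hi \<le> f (c + 1)" using \<open>\<not> f (c + 1) \<le> lo\<close> by linarith
      then have "v0 < c + 1" using f_less_imp[of v0 "c + 1"] v0 cv by simp
      with cv show False by simp
    next
      case True
      obtain u where u: "u < m" "vis u" using vis_ex by blast
      define a where "a = (LEAST u. vis u)"
      have va: "vis a" unfolding a_def using LeastI[of vis u] u by simp
      have am: "a < m" using Least_le[of vis u] u unfolding a_def[symmetric] by simp
      have "a \<notin> B" using True by simp
      then have "lo < f a" using am va unfolding B_def by simp
      then have "\<not> f a < hi" using none am va by blast
      then have "hi \<le> f a" by linarith
      then have "v0 < a" using f_less_imp[of v0 a] v0 am by simp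
      then have "vis (a - 1)" using vis_down[of a] am va \<open>hi \<le> f a\<close> by simp
      moreover have "\<not> vis (a - 1)" using not_less_Least[of "a - 1" vis] \<open>v0 < a\<close> unfolding a_def[symmetric] by simp
      ultimately show False by simp
    qed
  qed
  then obtain v where v: "v < m" "vis v" "lo < f v" "f v < hi" by blast
  then show ?thesis using absorb[OF v] by blast
qed

end


locale design = prob_space M for M :: "'a measure" +
  fixes Y :: "nat \<Rightarrow> 'a \<Rightarrow> bool" and F :: "real \<Rightarrow> real" and d :: "nat \<Rightarrow> real"
    and m x0 :: nat and p dp1 dp2 :: real
  assumes F_range: "\<And>x. 0 \<le> F x \<and> F x \<le> 1"
    and Y_meas: "\<And>i. Y i \<in> measurable M (count_space UNIV)"
    and Y_law: "\<And>n (ys :: nat \<Rightarrow> bool).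
       measure M {\<omega> \<in> space M. (\<forall>i<n. Y i \<omega> = ys i) \<and> Y n \<omega>}
       = F (d (alloc m p dp1 dp2 x0 ys n)) * measure M {\<omega> \<in> space M. \<forall>i<n. Y i \<omega> = ys i}"
begin

definition "qd ys = F (d (alloc m p dp1 dp2 x0 (\<lambda>i. ys ! i) (length ys)))"
definition "actu u ys = (alloc m p dp1 dp2 x0 (\<lambda>i. ys ! i) (length ys) = u)"
definition "X \<omega> n = alloc m p dp1 dp2 x0 (\<lambda>k. Y k \<omega>) n"
definition "est \<omega> n = tox_freq (allocs m p dp1 dp2 x0 (\<lambda>k. Y k \<omega>) n) (\<lambda>k. Y k \<omega>) (X \<omega> n)"

lemma pre_eq_iff: "length ys = n \<Longrightarrow> (pre Y n \<omega> = ys) = (\<forall>i<n. Y i \<omega> = ys ! i)"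
  by (auto simp: list_eq_iff_nth_eq)

lemma tree: "tree_model M Y qd"
proof
  show "Y i \<in> measurable M (count_space UNIV)" for i by (rule Y_meas)
  show "0 \<le> qd ys \<and> qd ys \<le> 1" for ys unfolding qd_def by (rule F_range)
  fix ys :: "bool list"
  have e1: "{\<omega>\<in>space M. pre Y (length ys) \<omega> = ys \<and> Y (length ys) \<omega>} =
     {\<omega>\<in>space M. (\<forall>i<length ys. Y i \<omega> = ys ! i) \<and> Y (length ys) \<omega>}"
    using pre_eq_iff[of ys "length ys"] by auto
  have e2: "{\<omega>\<in>space M. pre Y (length ys) \<omega> = ys} = {\<omega>\<in>space M. \<forall>i<length ys. Y i \<omega> = ys ! i}"
    using pre_eq_iff[of ys "length ys"] by auto
  show "prob {\<omega>\<in>space M. pre Y (length ys) \<omega> = ys \<and> Y (length ys) \<omega>} = qd ys * prob {\<omega>\<in>space M. pre Y (length ys) \<omega> = ys}"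
    unfolding e1 e2 qd_def using Y_law[of "length ys" "\<lambda>i. ys ! i"] by simp
qed

lemma walku: "walk M Y qd (actu u) (F (d u))"
  using tree
  by (rule walk.intro) (unfold_locales, auto simp: qd_def actu_def F_range)

lemma act_pre: "actu u (pre Y n \<omega>) = (X \<omega> n = u)"
proof -
  have "alloc m p dp1 dp2 x0 (\<lambda>i. pre Y n \<omega> ! i) n = alloc m p dp1 dp2 x0 (\<lambda>k. Y k \<omega>) n"
    by (rule alloc_cong) simp
  then show ?thesis by (simp add: actu_def X_def)
qed

lemma counts:
  "walk.Cl (actu u) (pre Y n \<omega>) = card {i. i < n \<and> X \<omega> i = u} \<and>
   walk.Sl (actu u) (pre Y n \<omega>) = card {i. i < n \<and> X \<omega> i = u \<and> Y i \<omega>}"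
proof -
  interpret W: walk M Y qd "actu u" "F (d u)" by (rule walku)
  show ?thesis
  proof (induction n)
    case 0 then show ?case by (simp add: W.Cl_def W.Sl_def)
  next
    case (Suc n)
    then show ?case by (simp add: W.Cw_Suc W.Sw_Suc act_pre card_lessSuc)
  qed
qed

lemma est_eq: "X \<omega> n = u \<Longrightarrow>
   est \<omega> n = real (walk.Sl (actu u) (pre Y (Suc n) \<omega>)) / real (walk.Cl (actu u) (pre Y (Suc n) \<omega>))"
proof -
  assume "X \<omega> n = u"
  have "walk.Cl (actu u) (pre Y (Suc n) \<omega>) = card {i. i < Suc n \<and> X \<omega> i = u}"
    "walk.Sl (actu u) (pre Y (Suc n) \<omega>) = card {i. i < Suc n \<and> X \<omega> i = u \<and> Y i \<omega>}"
    using counts[of u "Suc n" \<omega>] by auto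
  then show ?thesis using \<open>X \<omega> n = u\<close> unfolding est_def tox_freq_alloc by (simp add: X_def)
qed

lemma X_Suc: "X \<omega> (Suc n) = (if est \<omega> n \<le> p - dp1 then (if X \<omega> n + 1 < m then X \<omega> n + 1 else m - 1)
                 else if p + dp2 \<le> est \<omega> n then (if X \<omega> n = 0 then 0 else X \<omega> n - 1) else X \<omega> n)"
  unfolding X_def est_def alloc_Suc next_dose_def Let_def last_allocs by simp

lemma X_0: "X \<omega> 0 = x0" by (simp add: X_def alloc_def)

definition "DF u c \<omega> =
   ((F (d u) < c \<longrightarrow> (\<exists>N. \<forall>n\<ge>N. X \<omega> n = u \<longrightarrow> est \<omega> n < c)) \<and>
    (c < F (d u) \<longrightarrow> (\<exists>N. \<forall>n\<ge>N. X \<omega> n = u \<longrightarrow> c < est \<omega> n)) \<and>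
    (F (d u) = c \<longrightarrow> (\<forall>N. \<exists>n\<ge>N. X \<omega> n = u) \<longrightarrow> (\<forall>N. \<exists>n\<ge>N. X \<omega> n = u \<and> est \<omega> n \<le> c)) \<and>
    (F (d u) = c \<longrightarrow> (\<forall>N. \<exists>n\<ge>N. X \<omega> n = u) \<longrightarrow> (\<forall>N. \<exists>n\<ge>N. X \<omega> n = u \<and> c \<le> est \<omega> n)))"

lemma DF_AE: "AE \<omega> in M. DF u c \<omega>"
proof -
  interpret W: walk M Y qd "actu u" "F (d u)" by (rule walku)
  have Cpos: "0 < real (W.Cw \<omega> (Suc n))" if "X \<omega> n = u" for \<omega> n
    using that by (simp add: W.Cw_Suc act_pre)
  have estc: "est \<omega> n = real (W.Sw \<omega> (Suc n)) / real (W.Cw \<omega> (Suc n))" if "X \<omega> n = u" for \<omega> n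
    using est_eq[OF that] .
  have lt: "(est \<omega> n < c) = (real (W.Sw \<omega> (Suc n)) < c * real (W.Cw \<omega> (Suc n)))" if "X \<omega> n = u" for \<omega> n
    using Cpos[OF that] estc[OF that] by (simp add: divide_less_eq)
  have gt: "(c < est \<omega> n) = (c * real (W.Cw \<omega> (Suc n)) < real (W.Sw \<omega> (Suc n)))" if "X \<omega> n = u" for \<omega> n
    using Cpos[OF that] estc[OF that] by (simp add: less_divide_eq)
  have le: "(est \<omega> n \<le> c) = (real (W.Sw \<omega> (Suc n)) \<le> c * real (W.Cw \<omega> (Suc n)))" if "X \<omega> n = u" for \<omega> n
    using Cpos[OF that] estc[OF that] by (simp add: divide_le_eq)
  have ge: "(c \<le> est \<omega> n) = (c * real (W.Cw \<omega> (Suc n)) \<le> real (W.Sw \<omega> (Suc n)))" if "X \<omega> n = u" for \<omega> n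
    using Cpos[OF that] estc[OF that] by (simp add: le_divide_eq)
  have A1: "AE \<omega> in M. F (d u) < c \<longrightarrow> (\<exists>N. \<forall>n\<ge>N. X \<omega> n = u \<longrightarrow> est \<omega> n < c)"
  proof (cases "F (d u) < c")
    case True
    from W.walk_L[OF True] show ?thesis
    proof eventually_elim
      case (elim \<omega>)
      then obtain N where "\<forall>n\<ge>N. \<not> (actu u (pre Y n \<omega>) \<and> c * real (W.Cw \<omega> (Suc n)) \<le> real (W.Sw \<omega> (Suc n)))"
        by blast
      then have "\<forall>n\<ge>N. X \<omega> n = u \<longrightarrow> est \<omega> n < c" using lt by (auto simp: act_pre)
      then show ?case by blast
    qed
  qed simp
  have A2: "AE \<omega> in M. c < F (d u) \<longrightarrow> (\<exists>N. \<forall>n\<ge>N. X \<omega> n = u \<longrightarrow> c < est \<omega> n)"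
  proof (cases "c < F (d u)")
    case True
    from W.walk_L'[OF True] show ?thesis
    proof eventually_elim
      case (elim \<omega>)
      then obtain N where "\<forall>n\<ge>N. \<not> (actu u (pre Y n \<omega>) \<and> real (W.Sw \<omega> (Suc n)) \<le> c * real (W.Cw \<omega> (Suc n)))"
        by blast
      then have "\<forall>n\<ge>N. X \<omega> n = u \<longrightarrow> c < est \<omega> n" using gt by (auto simp: act_pre)
      then show ?case by blast
    qed
  qed simp
  have A3: "AE \<omega> in M. F (d u) = c \<longrightarrow> (\<forall>N. \<exists>n\<ge>N. X \<omega> n = u) \<longrightarrow> (\<forall>N. \<exists>n\<ge>N. X \<omega> n = u \<and> est \<omega> n \<le> c)"
    using W.walk_R
  proof eventually_elim
    case (elim \<omega>)
    show ?case
    proof (intro impI allI)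
      fix N assume c: "F (d u) = c" and io: "\<forall>N. \<exists>n\<ge>N. X \<omega> n = u"
      have "\<forall>N. \<exists>n\<ge>N. actu u (pre Y n \<omega>) \<and> real (W.Sw \<omega> (Suc n)) \<le> F (d u) * real (W.Cw \<omega> (Suc n))"
        using elim io by (simp add: act_pre)
      then obtain n where "n \<ge> N" "actu u (pre Y n \<omega>)" "real (W.Sw \<omega> (Suc n)) \<le> F (d u) * real (W.Cw \<omega> (Suc n))"
        by blast
      then show "\<exists>n\<ge>N. X \<omega> n = u \<and> est \<omega> n \<le> c" using le c by (auto simp: act_pre)
    qed
  qed
  have A4: "AE \<omega> in M. F (d u) = c \<longrightarrow> (\<forall>N. \<exists>n\<ge>N. X \<omega> n = u) \<longrightarrow> (\<forall>N. \<exists>n\<ge>N. X \<omega> n = u \<and> c \<le> est \<omega> n)"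
    using W.walk_R'
  proof eventually_elim
    case (elim \<omega>)
    show ?case
    proof (intro impI allI)
      fix N assume c: "F (d u) = c" and io: "\<forall>N. \<exists>n\<ge>N. X \<omega> n = u"
      have "\<forall>N. \<exists>n\<ge>N. actu u (pre Y n \<omega>) \<and> F (d u) * real (W.Cw \<omega> (Suc n)) \<le> real (W.Sw \<omega> (Suc n))"
        using elim io by (simp add: act_pre)
      then obtain n where "n \<ge> N" "actu u (pre Y n \<omega>)" "F (d u) * real (W.Cw \<omega> (Suc n)) \<le> real (W.Sw \<omega> (Suc n))"
        by blast
      then show "\<exists>n\<ge>N. X \<omega> n = u \<and> c \<le> est \<omega> n" using ge c by (auto simp: act_pre)
    qed
  qed
  from A1 A2 A3 A4 show ?thesis unfolding DF_def by eventually_elim blast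
qed

end


theorem corollary1:
  fixes M :: "'a measure" and Y :: "nat \<Rightarrow> 'a \<Rightarrow> bool"
    and F :: "real \<Rightarrow> real" and d :: "nat \<Rightarrow> real"
    and m x0 :: nat and p dp1 dp2 :: real
  assumes F_mono: "strict_mono F"
    and F_range: "\<And>x. 0 \<le> F x \<and> F x \<le> 1"
    and m_pos: "m \<ge> 1"
    and d_mono: "strict_mono_on {..<m} d"
    and p: "0 < p" "p < 1"
    and dp: "dp1 > 0" "dp2 > 0"
    and x0: "x0 < m"
    and M: "prob_space M"
    and Y_meas: "\<And>i. Y i \<in> measurable M (count_space UNIV)"
    and Y_law: "\<And>n (ys :: nat \<Rightarrow> bool).
       measure M {\<omega> \<in> space M. (\<forall>i<n. Y i \<omega> = ys i) \<and> Y n \<omega>}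
       = F (d (alloc m p dp1 dp2 x0 ys n)) * measure M {\<omega> \<in> space M. \<forall>i<n. Y i \<omega> = ys i}"
  shows
    "((\<forall>u<m. F (d u) \<notin> {p - dp1 <..< p + dp2}) \<and> F (d 0) \<le> p \<and> p \<le> F (d (m - 1))
       \<longrightarrow> (\<forall>j. j + 1 < m \<and> F (d j) \<le> p - dp1 \<and> F (d (j + 1)) \<ge> p + dp2 \<longrightarrow>
            (AE \<omega> in M.
               (\<exists>N. \<forall>i\<ge>N. alloc m p dp1 dp2 x0 (\<lambda>k. Y k \<omega>) i \<in> {j, j + 1})
             \<and> (\<forall>N. \<exists>i\<ge>N. alloc m p dp1 dp2 x0 (\<lambda>k. Y k \<omega>) i = j)
             \<and> (\<forall>N. \<exists>i\<ge>N. alloc m p dp1 dp2 x0 (\<lambda>k. Y k \<omega>) i = j + 1))))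
     \<and>
     (card {u. u < m \<and> F (d u) \<in> {p - dp1 <..< p + dp2}} > 1
       \<longrightarrow> (AE \<omega> in M. \<exists>v<m. F (d v) \<in> {p - dp1 <..< p + dp2} \<and>
              (\<exists>N. \<forall>i\<ge>N. alloc m p dp1 dp2 x0 (\<lambda>k. Y k \<omega>) i = v)))"
proof -
  interpret D: design M Y F d m x0 p dp1 dp2
    by (rule design.intro[OF M]) (unfold_locales, use F_range Y_meas Y_law in auto)
  define lo where "lo = p - dp1"
  define hi where "hi = p + dp2"
  have "AE \<omega> in M. \<forall>u. D.DF u lo \<omega> \<and> D.DF u hi \<omega>"
    unfolding AE_all_countable using D.DF_AE by (auto intro: AE_conjI)
  then have AEdet: "AE \<omega> in M. det (D.X \<omega>) (D.est \<omega>) m lo hi (\<lambda>u. F (d u))"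
  proof eventually_elim
    case (elim \<omega>)
    show ?case
    proof
      show "1 \<le> m" by (rule m_pos)
      show "D.X \<omega> 0 < m" using x0 by (simp add: D.X_0)
      show "lo < hi" using dp unfolding lo_def hi_def by simp
      show "D.X \<omega> (Suc n) = (if D.est \<omega> n \<le> lo then (if D.X \<omega> n + 1 < m then D.X \<omega> n + 1 else m - 1)
                 else if hi \<le> D.est \<omega> n then (if D.X \<omega> n = 0 then 0 else D.X \<omega> n - 1) else D.X \<omega> n)" for n
        unfolding lo_def hi_def by (rule D.X_Suc)
      show "F (d i) < F (d j)" if "i < j" "j < m" for i j
      proof -
        have "d i < d j" using d_mono that by (auto intro: strict_mono_onD)
        then show ?thesis using F_mono by (simp add: strict_monoD)
      qed
      fix u c assume u: "u < m" and c: "c \<in> {lo, hi}"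
      have df: "D.DF u c \<omega>" using elim c by auto
      show "F (d u) < c \<Longrightarrow> \<exists>N. \<forall>n\<ge>N. D.X \<omega> n = u \<longrightarrow> D.est \<omega> n < c"
        using df unfolding D.DF_def by blast
      show "c < F (d u) \<Longrightarrow> \<exists>N. \<forall>n\<ge>N. D.X \<omega> n = u \<longrightarrow> c < D.est \<omega> n"
        using df unfolding D.DF_def by blast
      show "F (d u) = c \<Longrightarrow> \<forall>N. \<exists>n\<ge>N. D.X \<omega> n = u \<Longrightarrow> \<forall>N. \<exists>n\<ge>N. D.X \<omega> n = u \<and> D.est \<omega> n \<le> c"
        using df unfolding D.DF_def by blast
      show "F (d u) = c \<Longrightarrow> \<forall>N. \<exists>n\<ge>N. D.X \<omega> n = u \<Longrightarrow> \<forall>N. \<exists>n\<ge>N. D.X \<omega> n = u \<and> c \<le> D.est \<omega> n"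
        using df unfolding D.DF_def by blast
    qed
  qed
  have Xeq: "alloc m p dp1 dp2 x0 (\<lambda>k. Y k \<omega>) i = D.X \<omega> i" for \<omega> i by (simp add: D.X_def)
  show ?thesis
  proof (intro conjI impI allI)
    fix j
    assume h: "(\<forall>u<m. F (d u) \<notin> {p - dp1 <..< p + dp2}) \<and> F (d 0) \<le> p \<and> p \<le> F (d (m - 1))"
      and hj: "j + 1 < m \<and> F (d j) \<le> p - dp1 \<and> p + dp2 \<le> F (d (j + 1))"
    show "AE \<omega> in M.
               (\<exists>N. \<forall>i\<ge>N. alloc m p dp1 dp2 x0 (\<lambda>k. Y k \<omega>) i \<in> {j, j + 1})
             \<and> (\<forall>N. \<exists>i\<ge>N. alloc m p dp1 dp2 x0 (\<lambda>k. Y k \<omega>) i = j)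
             \<and> (\<forall>N. \<exists>i\<ge>N. alloc m p dp1 dp2 x0 (\<lambda>k. Y k \<omega>) i = j + 1)"
      using AEdet
    proof eventually_elim
      case (elim \<omega>)
      interpret det "D.X \<omega>" "D.est \<omega>" m lo hi "\<lambda>u. F (d u)" by (rule elim)
      have "(\<exists>N. \<forall>i\<ge>N. D.X \<omega> i \<in> {j, j + 1}) \<and> vis j \<and> vis (j + 1)"
        by (rule partI) (use h hj in \<open>auto simp: lo_def hi_def\<close>)
      then show ?case unfolding Xeq vis_def by blast
    qed
  next
    assume c: "1 < card {u. u < m \<and> F (d u) \<in> {p - dp1 <..< p + dp2}}"
    then obtain v0 where v0: "v0 < m" "F (d v0) \<in> {p - dp1 <..< p + dp2}"
      by (metis (no_types, lifting) card.empty empty_Collect_eq not_less_zero)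
    show "AE \<omega> in M. \<exists>v<m. F (d v) \<in> {p - dp1 <..< p + dp2} \<and>
              (\<exists>N. \<forall>i\<ge>N. alloc m p dp1 dp2 x0 (\<lambda>k. Y k \<omega>) i = v)"
      using AEdet
    proof eventually_elim
      case (elim \<omega>)
      interpret det "D.X \<omega>" "D.est \<omega>" m lo hi "\<lambda>u. F (d u)" by (rule elim)
      have "\<exists>v<m. lo < F (d v) \<and> F (d v) < hi \<and> (\<exists>N. \<forall>i\<ge>N. D.X \<omega> i = v)"
        by (rule partII[of v0]) (use v0 in \<open>auto simp: lo_def hi_def\<close>)
      then show ?case unfolding Xeq lo_def hi_def by auto
    qed
  qed
qed


end
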